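(* Let $N\ge2$, $s\in(1/2,1)$, $q_1>1$, $q_2>1$, and let $V\colon(0,+\infty)\to[0,+\infty)$ and $K\colon(0,+\infty)\to(0,+\infty)$ be continuous. If $\mathcal S_0(q_1,R_1)<+\infty$ and $\mathcal S_\infty(q_2,R_2)<+\infty$ for some $R_1,R_2>0$, then $H^s_{V,\mathrm{rad}}(\mathbb{R}^N)$ is continuously embedded into $L^{q_1}_K(\mathbb{R}^N)+L^{q_2}_K(\mathbb{R}^N)$.
   Context: $B_R$ is the open ball of radius $R$ centered at the origin, $B_R^c$ its complement. For $0<s<1$, $2^*_s=\frac{2N}{N-2s}$, $C(N,s)=\left(\int_{\mathbb{R}^N}\frac{1-\cos\zeta_1}{|\zeta|^{N+2s}}d\zeta\right)^{-1}$, $[u]_{H^s}=\left(\frac{C(N,s)}{2}\iint_{\mathbb{R}^N\times\mathbb{R}^N}\frac{|u(x)-u(y)|^2}{|x-y|^{N+2s}}dx\,dy\right)^{1/2}$, $\dot H^s(\mathbb{R}^N)=\{u\in L^{2^*_s}(\mathbb{R}^N):[u]_{H^s}<\infty\}$, $H^s_V(\mathbb{R}^N)=\{u\in\dot H^s(\mathbb{R}^N):\int V(|x|)|u|^2dx<\infty\}$ with norm $\|u\|^2=[u]_{H^s}^2+\int_{\mathbb{R}^N}V(|x|)|u|^2dx$, and $H^s_{V,\mathrm{rad}}(\mathbb{R}^N)$ is the subspace of radial functions. $L^q_K(\mathbb{R}^N)=L^q(\mathbb{R}^N,K(|x|)dx)$ with norm $\|u\|_{L^q_K}=(\int K(|x|)|u|^qdx)^{1/q}$,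 and $L^{q_1}_K+L^{q_2}_K=\{u_1+u_2:u_i\in L^{q_i}_K\}$ with norm $\|u\|=\inf_{u=u_1+u_2}\max\{\|u_1\|_{L^{q_1}_K},\|u_2\|_{L^{q_2}_K}\}$. For $q>1$, $R>0$: $\mathcal S_0(q,R)=\sup\{\int_{B_R}K(|x|)|u|^qdx: u\in H^s_{V,\mathrm{rad}},\|u\|=1\}$ and $\mathcal S_\infty(q,R)=\sup\{\int_{B_R^c}K(|x|)|u|^qdx: u\in H^s_{V,\mathrm{rad}},\|u\|=1\}$. *)

theory Defs
  imports "HOL-Analysis.Analysis"
begin

text \<open>Ambient space R^N is an abstract Euclidean space 'a with N = DIM('a).
  Functions are real valued, given by (Borel measurable) representatives.\<close>

definition first_coord :: "'a::euclidean_space" where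
  "first_coord = (SOME b. b \<in> Basis)"

definition crit_exp :: "nat \<Rightarrow> real \<Rightarrow> real" where
  "crit_exp N s = 2 * real N / (real N - 2 * s)"

definition CNs :: "'a::euclidean_space itself \<Rightarrow> real \<Rightarrow> real" where
  "CNs TYPE('a) s = 1 / enn2real (\<integral>\<^sup>+ z. ennreal ((1 - cos (z \<bullet> (first_coord::'a)))
        / norm z powr (real DIM('a) + 2 * s)) \<partial>lborel)"

definition gagliardo_sq :: "real \<Rightarrow> ('a::euclidean_space \<Rightarrow> real) \<Rightarrow> ennreal" where
  "gagliardo_sq s u = ennreal (CNs TYPE('a) s / 2) *
     (\<integral>\<^sup>+ p. ennreal ((u (fst p) - u (snd p))\<^sup>2 / norm (fst p - snd p) powr (real DIM('a) + 2 * s))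
        \<partial>(lborel \<Otimes>\<^sub>M lborel))"

definition potential_int :: "(real \<Rightarrow> real) \<Rightarrow> ('a::euclidean_space \<Rightarrow> real) \<Rightarrow> ennreal" where
  "potential_int V u = (\<integral>\<^sup>+ x. ennreal (V (norm x) * (u x)\<^sup>2) \<partial>lborel)"

definition Hdot :: "real \<Rightarrow> ('a::euclidean_space \<Rightarrow> real) set" where
  "Hdot s = {u. u \<in> borel_measurable lborel
      \<and> (\<integral>\<^sup>+ x. ennreal (\<bar>u x\<bar> powr crit_exp DIM('a) s) \<partial>lborel) < \<infinity>
      \<and> gagliardo_sq s u < \<infinity>}"

definition HsV :: "real \<Rightarrow> (real \<Rightarrow> real) \<Rightarrow> ('a::euclidean_space \<Rightarrow> real) set" where
  "HsV s V = {u \<in> Hdot s. potential_int V u < \<infinity>}"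

definition radial :: "('a::real_normed_vector \<Rightarrow> real) \<Rightarrow> bool" where
  "radial u \<longleftrightarrow> (\<forall>x y. norm x = norm y \<longrightarrow> u x = u y)"

definition HsV_rad :: "real \<Rightarrow> (real \<Rightarrow> real) \<Rightarrow> ('a::euclidean_space \<Rightarrow> real) set" where
  "HsV_rad s V = {u \<in> HsV s V. radial u}"

definition HsV_norm :: "real \<Rightarrow> (real \<Rightarrow> real) \<Rightarrow> ('a::euclidean_space \<Rightarrow> real) \<Rightarrow> real" where
  "HsV_norm s V u = sqrt (enn2real (gagliardo_sq s u) + enn2real (potential_int V u))"

definition wint :: "(real \<Rightarrow> real) \<Rightarrow> real \<Rightarrow> 'a::euclidean_space set \<Rightarrow> ('a \<Rightarrow> real) \<Rightarrow> ennreal" where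
  "wint K q A u = (\<integral>\<^sup>+ x. ennreal (K (norm x) * \<bar>u x\<bar> powr q) * indicator A x \<partial>lborel)"

definition S0 :: "real \<Rightarrow> (real \<Rightarrow> real) \<Rightarrow> (real \<Rightarrow> real) \<Rightarrow> 'a::euclidean_space itself \<Rightarrow> real \<Rightarrow> real \<Rightarrow> ennreal" where
  "S0 s V K TYPE('a) q R = (SUP u \<in> {u \<in> (HsV_rad s V :: ('a \<Rightarrow> real) set). HsV_norm s V u = 1}.
      wint K q (ball 0 R) u)"

definition Sinf :: "real \<Rightarrow> (real \<Rightarrow> real) \<Rightarrow> (real \<Rightarrow> real) \<Rightarrow> 'a::euclidean_space itself \<Rightarrow> real \<Rightarrow> real \<Rightarrow> ennreal" where
  "Sinf s V K TYPE('a) q R = (SUP u \<in> {u \<in> (HsV_rad s V :: ('a \<Rightarrow> real) set). HsV_norm s V u = 1}.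
      wint K q (- ball 0 R) u)"

definition LqK :: "(real \<Rightarrow> real) \<Rightarrow> real \<Rightarrow> ('a::euclidean_space \<Rightarrow> real) set" where
  "LqK K q = {u. u \<in> borel_measurable lborel \<and> wint K q UNIV u < \<infinity>}"

definition LqK_norm :: "(real \<Rightarrow> real) \<Rightarrow> real \<Rightarrow> ('a::euclidean_space \<Rightarrow> real) \<Rightarrow> real" where
  "LqK_norm K q u = enn2real (wint K q UNIV u) powr (1 / q)"

definition LsumK :: "(real \<Rightarrow> real) \<Rightarrow> real \<Rightarrow> real \<Rightarrow> ('a::euclidean_space \<Rightarrow> real) set" where
  "LsumK K q1 q2 = {u. \<exists>u1 u2. u1 \<in> LqK K q1 \<and> u2 \<in> LqK K q2 \<and> u = (\<lambda>x. u1 x + u2 x)}"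

definition LsumK_norm :: "(real \<Rightarrow> real) \<Rightarrow> real \<Rightarrow> real \<Rightarrow> ('a::euclidean_space \<Rightarrow> real) \<Rightarrow> real" where
  "LsumK_norm K q1 q2 u = Inf {max (LqK_norm K q1 u1) (LqK_norm K q2 u2) | u1 u2.
      u1 \<in> LqK K q1 \<and> u2 \<in> LqK K q2 \<and> u = (\<lambda>x. u1 x + u2 x)}"

definition cont_embedded :: "real \<Rightarrow> (real \<Rightarrow> real) \<Rightarrow> (real \<Rightarrow> real) \<Rightarrow> 'a::euclidean_space itself \<Rightarrow> real \<Rightarrow> real \<Rightarrow> bool" where
  "cont_embedded s V K TYPE('a) q1 q2 \<longleftrightarrow>
     (HsV_rad s V :: ('a \<Rightarrow> real) set) \<subseteq> LsumK K q1 q2 \<and>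
     (\<exists>C. \<forall>u \<in> (HsV_rad s V :: ('a \<Rightarrow> real) set). LsumK_norm K q1 q2 u \<le> C * HsV_norm s V u)"

end

theory Submission
  imports Defs
begin

lemma ball_emeas:
  assumes "r \<ge> 0"
  shows "emeasure lborel (ball (c::'a::euclidean_space) r) = ennreal (unit_ball_vol (DIM('a)) * r ^ DIM('a))"
  by (rule emeasure_ball[OF assms])

lemma iso_open:
  fixes H :: "'a::euclidean_space \<Rightarrow> 'a"
  assumes lin: "linear H" and inv: "\<And>x. H (H x) = x" and nm: "\<And>x. norm (H x) = norm x"
    and U: "open U"
  shows "emeasure lborel (H ` U) = emeasure lborel U"
proof -
  have bl: "bounded_linear H" using lin by (simp add: linear_conv_bounded_linear)
  have dist: "dist (H x) (H y) = dist x y" for x y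
    using nm[of "x - y"] by (simp add: dist_norm linear_diff[OF lin])
  have hball: "H ` ball c r = ball (H c) r" for c r
  proof
    show "H ` ball c r \<subseteq> ball (H c) r" using dist by (auto simp: ball_def)
    show "ball (H c) r \<subseteq> H ` ball c r"
    proof
      fix y assume "y \<in> ball (H c) r"
      then have "H y \<in> ball c r" using dist[of "H c" y] by (simp add: inv ball_def dist_commute)
      then show "y \<in> H ` ball c r" using inv[of y] by (metis image_eqI)
    qed
  qed
  have injH: "inj H" by (metis inv injI)
  define K where "K = {(c::'a, r::real). 0 < r \<and> ball c r \<subseteq> U}"
  have cov: "\<exists>i. i \<in> K \<and> x \<in> ball (fst i) (snd i) \<and> snd i < d" if "x \<in> U" "0 < d" for x d
  proof -
    obtain e where e: "e > 0" "ball x e \<subseteq> U" using U \<open>x \<in> U\<close> open_contains_ball by blast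
    show ?thesis
      by (rule exI[of _ "(x, min e (d/2))"]) (use e \<open>0<d\<close> in \<open>auto simp: K_def\<close>)
  qed
  obtain C where C: "countable C" "C \<subseteq> K"
     "pairwise (\<lambda>i j. disjnt (ball (fst i) (snd i)) (ball (fst j) (snd j))) C"
     "negligible (U - (\<Union>i \<in> C. ball (fst i) (snd i)))"
    using Vitali_covering_theorem_balls[of U K fst snd, OF cov] by blast
  define B where "B = (\<Union>i \<in> C. ball (fst i) (snd i))"
  have BU: "B \<subseteq> U"
  proof
    fix x assume "x \<in> B"
    then obtain i where "i \<in> C" "x \<in> ball (fst i) (snd i)" by (auto simp: B_def)
    moreover have "ball (fst i) (snd i) \<subseteq> U" using C(2) \<open>i \<in> C\<close> unfolding K_def
      by (cases i) auto
    ultimately show "x \<in> U" by blast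
  qed
  have Bsets: "B \<in> sets lborel" unfolding B_def
    by (rule sets.countable_UN'') (use C(1) in auto)
  have Usets: "U \<in> sets lborel" using U by simp
  have null1: "U - B \<in> null_sets lborel"
  proof -
    have "U - B \<in> null_sets lebesgue" using C(4) by (simp add: B_def negligible_iff_null_sets)
    then show ?thesis using null_sets_completion_iff[of "U - B" lborel] Bsets Usets by auto
  qed
  have disj: "disjoint_family_on (\<lambda>i. ball (fst i) (snd i)) C"
    using C(3) unfolding disjoint_family_on_def pairwise_def disjnt_def
    by (metis inf.idem ball_empty empty_iff le_less_linear Int_emptyI)
  have disj2: "disjoint_family_on (\<lambda>i. ball (H (fst i)) (snd i)) C"
    using disj unfolding disjoint_family_on_def
    by (metis hball image_Int[OF injH] image_empty)
  have eU: "emeasure lborel U = emeasure lborel B"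
  proof -
    have "U = B \<union> (U - B)" using BU by auto
    then have "emeasure lborel U = emeasure lborel B + emeasure lborel (U - B)"
      by (metis Bsets Diff_disjoint Int_commute Diff_eq_empty_iff null1 NO_MATCH_def
           plus_emeasure[of B lborel "U - B"] inf_sup_aci(1) null_setsD2 Int_Diff_disjoint)
    then show ?thesis using null1 by auto
  qed
  have HB: "H ` B = (\<Union>i \<in> C. ball (H (fst i)) (snd i))"
    unfolding B_def image_UN hball ..
  have HBsets: "H ` B \<in> sets lborel" unfolding HB
    by (rule sets.countable_UN'') (use C(1) in auto)
  have contH: "continuous_on UNIV H" using bl linear_continuous_on by blast
  have HU_open: "open (H ` U)"
  proof -
    have "H ` U = H -` U" using inv by (auto intro: image_eqI[of _ H "H _"] simp: image_iff)
    then show ?thesis using open_vimage[OF U contH] by simp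
  qed
  have null2: "H ` U - H ` B \<in> null_sets lborel"
  proof -
    have "negligible (H ` (U - B))"
      by (rule negligible_differentiable_image_negligible)
         (use C(4) in \<open>auto simp: B_def intro: bounded_linear_imp_differentiable_on[OF bl]\<close>)
    then have "H ` U - H ` B \<in> null_sets lebesgue"
      by (simp add: negligible_iff_null_sets image_set_diff[OF injH])
    moreover have "H ` U - H ` B \<in> sets lborel" using HU_open HBsets by auto
    ultimately show ?thesis using null_sets_completion_iff by blast
  qed
  have eHU: "emeasure lborel (H ` U) = emeasure lborel (H ` B)"
  proof -
    have BU': "H ` B \<subseteq> H ` U" using BU by auto
    have "emeasure lborel (H ` U) = emeasure lborel (H ` B) + emeasure lborel (H ` U - H ` B)"
      by (subst plus_emeasure) (use HBsets null2 BU' in \<open>auto intro: arg_cong[where f="emeasure lborel"]\<close>)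
    then show ?thesis using null2 by auto
  qed
  have "emeasure lborel (H ` B) = (\<integral>\<^sup>+i. emeasure lborel (ball (H (fst i)) (snd i)) \<partial>count_space C)"
    unfolding HB by (rule emeasure_UN_countable) (use C(1) disj2 in auto)
  also have "\<dots> = (\<integral>\<^sup>+i. emeasure lborel (ball (fst i) (snd i)) \<partial>count_space C)"
    using C(2) by (intro nn_integral_cong) (auto simp: K_def ball_emeas)
  also have "\<dots> = emeasure lborel B"
    unfolding B_def by (rule emeasure_UN_countable[symmetric]) (use C(1) disj in auto)
  finally show ?thesis using eU eHU by simp
qed

lemma iso_distr:
  fixes H :: "'a::euclidean_space \<Rightarrow> 'a"
  assumes lin: "linear H" and inv: "\<And>x. H (H x) = x" and nm: "\<And>x. norm (H x) = norm x"
  shows "distr lborel borel H = lborel"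
proof -
  have bl: "bounded_linear H" using lin by (simp add: linear_conv_bounded_linear)
  have Hm: "H \<in> borel_measurable lborel"
    using bl by (simp add: borel_measurable_continuous_onI linear_continuous_on)
  have pre: "H -` X = H ` X" for X using inv by (auto intro: image_eqI[of _ H "H _"] simp: image_iff)
  show ?thesis
  proof (rule measure_eqI_generator_eq[where E="{S. open S}" and \<Omega>=UNIV and A="\<lambda>i. ball 0 (real i)"])
    show "Int_stable {S::'a set. open S}" by (auto simp: Int_stable_def)
    show "{S::'a set. open S} \<subseteq> Pow UNIV" by auto
    fix X :: "'a set" assume "X \<in> {S. open S}"
    then show "emeasure (distr lborel borel H) X = emeasure lborel X"
      using Hm by (subst emeasure_distr) (auto simp: pre iso_open[OF lin inv nm])
  next
    show "sets (distr lborel borel H) = sigma_sets UNIV {S::'a set. open S}" by (simp add: sets_borel)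
    show "sets (lborel::'a measure) = sigma_sets UNIV {S. open S}" by (simp add: sets_borel)
    show "range (\<lambda>i. ball (0::'a) (real i)) \<subseteq> {S. open S}" by auto
    show "(\<Union>i. ball (0::'a) (real i)) = UNIV"
      by (auto simp: dist_norm) (meson real_arch_simple le_less_trans lt_ex order_less_le_trans reals_Archimedean2)
    fix i
    show "emeasure (distr lborel borel H) (ball 0 (real i)) \<noteq> \<infinity>"
      using Hm emeasure_lborel_ball_finite[of "0::'a" "real i"]
      by (subst emeasure_distr) (auto simp: pre iso_open[OF lin inv nm])
  qed
qed

lemma iso_nn:
  fixes H :: "'a::euclidean_space \<Rightarrow> 'a"
  assumes lin: "linear H" and inv: "\<And>x. H (H x) = x" and nm: "\<And>x. norm (H x) = norm x"
    and f: "f \<in> borel_measurable borel"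
  shows "(\<integral>\<^sup>+x. f (H x) \<partial>lborel) = (\<integral>\<^sup>+x. f x \<partial>lborel)"
proof -
  have bl: "bounded_linear H" using lin by (simp add: linear_conv_bounded_linear)
  have Hm: "H \<in> measurable lborel borel"
    using bl by (simp add: borel_measurable_continuous_onI linear_continuous_on)
  have "(\<integral>\<^sup>+x. f x \<partial>distr lborel borel H) = (\<integral>\<^sup>+x. f (H x) \<partial>lborel)"
    by (rule nn_integral_distr[OF Hm]) (use f in simp)
  then show ?thesis using iso_distr[OF lin inv nm] by simp
qed

definition reflm :: "'a::euclidean_space \<Rightarrow> 'a \<Rightarrow> 'a" where
  "reflm u x = x - (2 * (x \<bullet> u) / (u \<bullet> u)) *\<^sub>R u"

lemma reflm_props:
  fixes u :: "'a::euclidean_space"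
  assumes "u \<noteq> 0"
  shows "linear (reflm u)" "\<And>x. reflm u (reflm u x) = x" "\<And>x. norm (reflm u x) = norm x"
proof -
  show "linear (reflm u)" unfolding reflm_def
    by (rule linearI) (auto simp: inner_add_left algebra_simps add_divide_distrib scaleR_add_left)
  have uu: "u \<bullet> u > 0" using assms by simp
  fix x
  show "reflm u (reflm u x) = x" unfolding reflm_def using uu
    by (simp add: inner_diff_left algebra_simps)
  have "(norm (reflm u x))\<^sup>2 = (norm x)\<^sup>2" unfolding reflm_def power2_norm_eq_inner using uu
    by (simp add: inner_diff_left inner_diff_right algebra_simps) (simp add: field_simps power2_eq_square inner_commute)
  then show "norm (reflm u x) = norm x" by (simp add: power2_eq_iff_nonneg)
qed

lemma exists_iso:
  fixes a b :: "'a::euclidean_space"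
  assumes "norm a = norm b"
  shows "\<exists>H. linear H \<and> (\<forall>x. H (H x) = x) \<and> (\<forall>x. norm (H x) = norm x) \<and> H a = b"
proof (cases "a = b")
  case True
  then show ?thesis by (intro exI[of _ id]) (auto simp: linear_id)
next
  case False
  let ?u = "a - b"
  have u0: "?u \<noteq> 0" using False by simp
  have aa: "a \<bullet> a = b \<bullet> b" using assms by (simp add: power2_norm_eq_inner[symmetric])
  have uu: "?u \<bullet> ?u = 2 * (a \<bullet> ?u)" using aa by (simp add: inner_diff_left inner_diff_right inner_commute)
  have nz: "a \<bullet> ?u \<noteq> 0" using uu u0 by (metis inner_eq_zero_iff mult_zero_right)
  have "reflm ?u a = b" unfolding reflm_def uu using nz by simp
  then show ?thesis using reflm_props[OF u0] by blast
qed

definition kern :: "real \<Rightarrow> ('a::euclidean_space \<Rightarrow> real) \<Rightarrow> 'a \<Rightarrow> 'a \<Rightarrow> real" where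
  "kern s v y z = (v y - v z)\<^sup>2 / norm (y - z) powr (real DIM('a) + 2 * s)"

definition Gn :: "real \<Rightarrow> ('a::euclidean_space \<Rightarrow> real) \<Rightarrow> ennreal" where
  "Gn s v = (\<integral>\<^sup>+y. \<integral>\<^sup>+z. ennreal (kern s v y z) \<partial>lborel \<partial>lborel)"

definition Eb :: "real \<Rightarrow> ('a::euclidean_space \<Rightarrow> real) \<Rightarrow> 'a \<Rightarrow> real \<Rightarrow> ennreal" where
  "Eb s v x r = (\<integral>\<^sup>+y. \<integral>\<^sup>+z. indicator (ball x r) y * indicator (ball x r) z * ennreal (kern s v y z) \<partial>lborel \<partial>lborel)"

lemma kern_nonneg: "kern s v y z \<ge> 0"
  by (simp add: kern_def)

lemma kern_meas[measurable]:
  assumes [measurable]: "v \<in> borel_measurable borel"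
  shows "(\<lambda>p. kern s v (fst p) (snd p)) \<in> borel_measurable (borel \<Otimes>\<^sub>M borel)"
  unfolding kern_def by measurable

lemma kern_meas2[measurable]:
  assumes [measurable]: "v \<in> borel_measurable borel"
  shows "(\<lambda>p. kern s v (fst p) (snd p)) \<in> borel_measurable (lborel \<Otimes>\<^sub>M lborel)"
  using kern_meas[OF assms] by (simp add: measurable_lborel2)

lemma kern_meas1[measurable]:
  assumes [measurable]: "v \<in> borel_measurable borel"
  shows "(\<lambda>z. kern s v a z) \<in> borel_measurable borel"
  unfolding kern_def by measurable

lemma ball_sets[measurable]: "ball (c::'a::euclidean_space) r \<in> sets borel"
  by simp

lemma pred_ball[measurable]: "Measurable.pred borel (\<lambda>x::'a::euclidean_space. x \<in> ball c r)"
  by (rule pred_sets2[OF ball_sets]) simp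

lemma Eb_mono:
  assumes "ball x r \<subseteq> ball w r'"
  shows "Eb s v x r \<le> Eb s v w r'"
  unfolding Eb_def using assms
  by (intro nn_integral_mono mult_right_mono) (auto simp: indicator_def intro!: mult_mono)

lemma Eb_rot:
  assumes vm: "v \<in> borel_measurable borel" and rad: "radial v" and nx: "norm x = norm x'"
  shows "Eb s v x r = Eb s v x' r"
proof -
  obtain H where H: "linear H" "\<And>x. H (H x) = x" "\<And>x. norm (H x) = norm x" "H x' = x"
    using exists_iso[of x' x] nx by metis
  have Hx: "H x = x'" using H(2)[of x'] H(4) by simp
  have dH: "norm (H a - H b) = norm (a - b)" for a b
    using H(3)[of "a - b"] by (simp add: linear_diff[OF H(1)])
  have vH: "v (H a) = v a" for a using rad H(3) unfolding radial_def by blast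
  have kH: "kern s v (H a) (H b) = kern s v a b" for a b by (simp add: kern_def vH dH)
  have bl: "bounded_linear H" using H(1) by (simp add: linear_conv_bounded_linear)
  have Hm[measurable]: "H \<in> borel_measurable borel"
    using bl by (simp add: borel_measurable_continuous_onI linear_continuous_on)
  have ind: "indicator (ball x' r) (H a) = (indicator (ball x r) a :: ennreal)" for a
    using dH[of x a] by (simp add: indicator_def Hx[symmetric] dist_norm)
  have inner: "(\<integral>\<^sup>+z. indicator (ball x' r) (H a) * indicator (ball x' r) z * ennreal (kern s v (H a) z) \<partial>lborel)
      = (\<integral>\<^sup>+z. indicator (ball x r) a * indicator (ball x r) z * ennreal (kern s v a z) \<partial>lborel)" for a
  proof -
    have "(\<integral>\<^sup>+z. indicator (ball x' r) (H a) * indicator (ball x' r) z * ennreal (kern s v (H a) z) \<partial>lborel)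
      = (\<integral>\<^sup>+z. indicator (ball x' r) (H a) * indicator (ball x' r) (H z) * ennreal (kern s v (H a) (H z)) \<partial>lborel)"
      by (rule iso_nn[OF H(1-3), symmetric]) (use vm in measurable)
    then show ?thesis by (simp add: ind kH)
  qed
  have "Eb s v x' r = (\<integral>\<^sup>+y. \<integral>\<^sup>+z. indicator (ball x' r) (H y) * indicator (ball x' r) z * ennreal (kern s v (H y) z) \<partial>lborel \<partial>lborel)"
    unfolding Eb_def
    by (rule iso_nn[OF H(1-3), symmetric, where f="\<lambda>y. \<integral>\<^sup>+z. indicator (ball x' r) y * indicator (ball x' r) z * ennreal (kern s v y z) \<partial>lborel"])
       (use vm in measurable)
  also have "\<dots> = Eb s v x r" unfolding Eb_def inner ..
  finally show ?thesis ..
qed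

lemma pred_dist_less[measurable]:
  fixes f g :: "'b \<Rightarrow> 'a::euclidean_space"
  assumes [measurable]: "f \<in> borel_measurable M" "g \<in> borel_measurable M"
  shows "Measurable.pred M (\<lambda>x. dist (f x) (g x) < r)"
  by measurable

definition Fk :: "real \<Rightarrow> ('a::euclidean_space \<Rightarrow> real) \<Rightarrow> real \<Rightarrow> 'a \<Rightarrow> 'a \<Rightarrow> 'a \<Rightarrow> ennreal" where
  "Fk s v r w y z = indicator (ball w r) y * indicator (ball w r) z * ennreal (kern s v y z)"

lemma Fk_meas[measurable]:
  fixes w y z :: "'b \<Rightarrow> 'a::euclidean_space"
  assumes [measurable]: "v \<in> borel_measurable borel" "w \<in> borel_measurable M" "y \<in> borel_measurable M" "z \<in> borel_measurable M"
  shows "(\<lambda>p. Fk s v r (w p) (y p) (z p)) \<in> borel_measurable M"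
  unfolding Fk_def indicator_def mem_ball kern_def by measurable

lemma Eb_int_bound:
  assumes vm[measurable]: "v \<in> borel_measurable borel" and "\<rho> > 0"
  shows "(\<integral>\<^sup>+w. Eb s v w \<rho> \<partial>lborel) \<le> ennreal (unit_ball_vol (real DIM('a)) * \<rho> ^ DIM('a)) * Gn s (v::'a::euclidean_space \<Rightarrow> real)"
proof -
  let ?c = "ennreal (unit_ball_vol (real DIM('a)) * \<rho> ^ DIM('a))"
  let ?F = "Fk s v \<rho>"
  have "(\<integral>\<^sup>+w. Eb s v w \<rho> \<partial>lborel) = (\<integral>\<^sup>+w. \<integral>\<^sup>+y. \<integral>\<^sup>+z. ?F w y z \<partial>lborel \<partial>lborel \<partial>lborel)"
    by (simp add: Eb_def Fk_def)
  also have "\<dots> = (\<integral>\<^sup>+y. \<integral>\<^sup>+w. \<integral>\<^sup>+z. ?F w y z \<partial>lborel \<partial>lborel \<partial>lborel)"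
    by (rule lborel_pair.Fubini'[symmetric]) measurable
  also have "\<dots> = (\<integral>\<^sup>+y. \<integral>\<^sup>+z. \<integral>\<^sup>+w. ?F w y z \<partial>lborel \<partial>lborel \<partial>lborel)"
    by (intro nn_integral_cong lborel_pair.Fubini'[symmetric]) measurable
  also have "\<dots> \<le> (\<integral>\<^sup>+y. \<integral>\<^sup>+z. ?c * ennreal (kern s v y z) \<partial>lborel \<partial>lborel)"
  proof (intro nn_integral_mono)
    fix y z :: 'a
    have "(\<integral>\<^sup>+w. ?F w y z \<partial>lborel) \<le> (\<integral>\<^sup>+w. ennreal (kern s v y z) * indicator (ball y \<rho>) w \<partial>lborel)"
      by (intro nn_integral_mono) (auto simp: Fk_def indicator_def dist_commute)
    also have "\<dots> = ennreal (kern s v y z) * emeasure lborel (ball y \<rho>)"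
      by (rule nn_integral_cmult_indicator) simp
    also have "\<dots> = ?c * ennreal (kern s v y z)"
      using \<open>\<rho> > 0\<close> by (simp add: ball_emeas mult.commute)
    finally show "(\<integral>\<^sup>+w. ?F w y z \<partial>lborel) \<le> ?c * ennreal (kern s v y z)" .
  qed
  also have "\<dots> = (\<integral>\<^sup>+y. ?c * \<integral>\<^sup>+z. ennreal (kern s v y z) \<partial>lborel \<partial>lborel)"
    by (intro nn_integral_cong nn_integral_cmult) measurable
  also have "\<dots> = ?c * Gn s v" unfolding Gn_def
    by (rule nn_integral_cmult) measurable
  finally show ?thesis .
qed

lemma shell_meas_lower:
  fixes r \<rho> :: real
  assumes "r > 0" "\<rho> > 0"
  shows "ennreal (unit_ball_vol (real DIM('a)) * (r ^ (DIM('a) - 1) * \<rho>))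
     \<le> emeasure lborel (ball (0::'a::euclidean_space) (r + \<rho>) - ball 0 r)"
proof -
  let ?w = "unit_ball_vol (real DIM('a))" and ?N = "DIM('a)"
  have w0: "?w > 0" by simp
  have sub: "ball (0::'a) r \<subseteq> ball 0 (r + \<rho>)" using assms by auto
  have "emeasure lborel (ball (0::'a) (r + \<rho>) - ball 0 r) = ennreal (?w * (r + \<rho>) ^ ?N) - ennreal (?w * r ^ ?N)"
    using assms sub by (subst emeasure_Diff) (auto simp: ball_emeas emeasure_lborel_ball_finite[THEN less_imp_neq])
  also have "\<dots> = ennreal (?w * (r + \<rho>) ^ ?N - ?w * r ^ ?N)"
    using assms by (subst ennreal_minus) auto
  finally have e: "emeasure lborel (ball (0::'a) (r + \<rho>) - ball 0 r) = ennreal (?w * (r + \<rho>) ^ ?N - ?w * r ^ ?N)" .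
  have N1: "?N = Suc (?N - 1)" using DIM_positive[where 'a='a] by linarith
  have "(r + \<rho>) ^ ?N = (r + \<rho>) ^ (?N - 1) * (r + \<rho>)" by (metis N1 power_Suc2)
  also have "\<dots> \<ge> r ^ (?N - 1) * (r + \<rho>)"
    using assms by (intro mult_right_mono power_mono) auto
  finally have X: "(r + \<rho>) ^ ?N \<ge> r ^ (?N - 1) * (r + \<rho>)" .
  have "r ^ ?N = r ^ (?N - 1) * r" by (metis N1 power_Suc2)
  then have "(r + \<rho>) ^ ?N \<ge> r ^ ?N + r ^ (?N - 1) * \<rho>" using X by (simp add: algebra_simps)
  then have "r ^ (?N - 1) * \<rho> \<le> (r + \<rho>) ^ ?N - r ^ ?N" by linarith
  then have "?w * (r ^ (?N - 1) * \<rho>) \<le> ?w * ((r + \<rho>) ^ ?N - r ^ ?N)"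
    using w0 by (intro mult_left_mono) auto
  then have "?w * (r ^ (?N - 1) * \<rho>) \<le> ?w * (r + \<rho>) ^ ?N - ?w * r ^ ?N"
    by (simp add: right_diff_distrib)
  then show ?thesis unfolding e by (rule ennreal_leI)
qed

lemma Eb_bound:
  assumes vm[measurable]: "v \<in> borel_measurable borel" and rad: "radial v"
    and x0: "(x::'a::euclidean_space) \<noteq> 0" and rho: "\<rho> > 0"
  shows "Eb s v x \<rho> \<le> ennreal (2 ^ DIM('a) * \<rho> ^ (DIM('a) - 1) / norm x ^ (DIM('a) - 1)) * Gn s v"
proof -
  let ?w = "unit_ball_vol (real DIM('a))" and ?N = "DIM('a)"
  define r where "r = norm x"
  have r0: "r > 0" using x0 by (simp add: r_def)
  define S where "S = ball (0::'a) (r + \<rho>) - ball 0 r"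
  have Ssets: "S \<in> sets lborel" by (simp add: S_def)
  have pt: "Eb s v x \<rho> \<le> Eb s v w (2 * \<rho>)" if "w \<in> S" for w
  proof -
    have nw: "r \<le> norm w" "norm w < r + \<rho>" using that by (auto simp: S_def)
    then have w0: "w \<noteq> 0" using r0 by auto
    define xw where "xw = (r / norm w) *\<^sub>R w"
    have nxw: "norm xw = r" using w0 r0 by (simp add: xw_def)
    have "xw - w = (r / norm w - 1) *\<^sub>R w" by (simp add: xw_def algebra_simps)
    then have "norm (xw - w) = \<bar>r / norm w - 1\<bar> * norm w" by simp
    also have "\<dots> = norm w - r" using w0 nw by (simp add: abs_if field_simps)
    finally have dxw: "dist xw w < \<rho>" using nw by (simp add: dist_norm)
    have "Eb s v x \<rho> = Eb s v xw \<rho>" by (rule Eb_rot[OF vm rad]) (simp add: nxw r_def)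
    also have "\<dots> \<le> Eb s v w (2 * \<rho>)"
    proof (rule Eb_mono)
      show "ball xw \<rho> \<subseteq> ball w (2 * \<rho>)"
      proof
        fix y assume "y \<in> ball xw \<rho>"
        then have "dist xw y < \<rho>" by simp
        then have "dist w y < 2 * \<rho>" using dxw dist_triangle[of w y xw] by (simp add: dist_commute)
        then show "y \<in> ball w (2 * \<rho>)" by simp
      qed
    qed
    finally show ?thesis .
  qed
  have "Eb s v x \<rho> * emeasure lborel S = (\<integral>\<^sup>+w. Eb s v x \<rho> * indicator S w \<partial>lborel)"
    by (rule nn_integral_cmult_indicator[symmetric]) (simp add: S_def)
  also have "\<dots> \<le> (\<integral>\<^sup>+w. Eb s v w (2 * \<rho>) \<partial>lborel)"
    by (intro nn_integral_mono) (auto simp: indicator_def pt)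
  also have "\<dots> \<le> ennreal (?w * (2 * \<rho>) ^ ?N) * Gn s v"
    by (rule Eb_int_bound) (use rho in auto)
  finally have A: "Eb s v x \<rho> * emeasure lborel S \<le> ennreal (?w * (2 * \<rho>) ^ ?N) * Gn s v" .
  have B: "ennreal (?w * (r ^ (?N - 1) * \<rho>)) \<le> emeasure lborel S"
    unfolding S_def by (rule shell_meas_lower[OF r0 rho])
  define a where "a = ?w * (r ^ (?N - 1) * \<rho>)"
  have a0: "a > 0" using r0 rho by (simp add: a_def)
  have "Eb s v x \<rho> * ennreal a \<le> ennreal (?w * (2 * \<rho>) ^ ?N) * Gn s v"
    using A B unfolding a_def[symmetric] by (meson mult_left_mono order_trans zero_le)
  then have "Eb s v x \<rho> * ennreal a * ennreal (1 / a) \<le> ennreal (?w * (2 * \<rho>) ^ ?N) * Gn s v * ennreal (1 / a)"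
    by (rule mult_right_mono) simp
  moreover have "ennreal a * ennreal (1 / a) = 1" using a0 by (simp add: ennreal_mult[symmetric])
  ultimately have "Eb s v x \<rho> \<le> ennreal (?w * (2 * \<rho>) ^ ?N) * Gn s v * ennreal (1 / a)"
    by (metis mult.assoc mult_1_right)
  also have "\<dots> = ennreal (?w * (2 * \<rho>) ^ ?N) * ennreal (1 / a) * Gn s v"
    by (simp only: ac_simps)
  also have "ennreal (?w * (2 * \<rho>) ^ ?N) * ennreal (1 / a) = ennreal (2 ^ ?N * \<rho> ^ (?N - 1) / norm x ^ (?N - 1))"
  proof -
    have N1: "?N = Suc (?N - 1)" using DIM_positive[where 'a='a] by linarith
    have "?w * (2 * \<rho>) ^ ?N * (1 / a) = 2 ^ ?N * \<rho> ^ (?N - 1) / norm x ^ (?N - 1)"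
    proof -
      have p: "\<rho> ^ ?N = \<rho> * \<rho> ^ (?N - 1)" by (metis N1 power_Suc)
      have w0: "?w \<noteq> 0" using unit_ball_vol_pos[of "real DIM('a)"] by linarith
      show ?thesis
        unfolding a_def r_def using r0 rho w0
        by (simp add: power_mult_distrib p field_simps r_def)
    qed
    moreover have "ennreal (?w * (2 * \<rho>) ^ ?N) * ennreal (1 / a) = ennreal (?w * (2 * \<rho>) ^ ?N * (1 / a))"
      using a0 rho by (subst ennreal_mult) auto
    ultimately show ?thesis by simp
  qed
  finally show ?thesis .
qed

definition avg :: "'a::euclidean_space set \<Rightarrow> ('a \<Rightarrow> real) \<Rightarrow> real" where
  "avg S v = (\<integral>y. indicator S y * v y \<partial>lborel) / measure lborel S"

lemma amgm: "(e::real) > 0 \<Longrightarrow> \<bar>d\<bar> \<le> e / 2 + d\<^sup>2 / (2 * e)"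
proof -
  assume e: "e > 0"
  have "0 \<le> (\<bar>d\<bar> - e)\<^sup>2" by simp
  then have "2 * e * \<bar>d\<bar> \<le> e\<^sup>2 + d\<^sup>2" by (simp add: power2_eq_square algebra_simps)
  then show ?thesis using e by (simp add: field_simps power2_eq_square)
qed

lemma avg_core:
  fixes f :: "'a::euclidean_space \<Rightarrow> real" and g :: "'a \<Rightarrow> ennreal"
  assumes P: "P \<in> sets lborel" and mP: "emeasure lborel P = ennreal m" "m > 0"
    and fi: "integrable lborel (\<lambda>y. indicator P y * f y)"
    and gm: "g \<in> borel_measurable lborel"
    and bd: "\<And>y. y \<in> P \<Longrightarrow> ennreal \<bar>f y\<bar> \<le> ennreal a + ennreal b * g y"
    and ab: "a \<ge> 0" "b \<ge> 0"
  shows "ennreal \<bar>(\<integral>y. indicator P y * f y \<partial>lborel) / m\<bar> \<le> ennreal a + ennreal (b / m) * (\<integral>\<^sup>+y. indicator P y * g y \<partial>lborel)"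
proof -
  let ?I = "\<integral>y. indicator P y * f y \<partial>lborel"
  have "ennreal \<bar>?I / m\<bar> = ennreal (1 / m) * ennreal \<bar>?I\<bar>"
    using mP by (simp add: ennreal_mult[symmetric] abs_divide)
  also have "ennreal \<bar>?I\<bar> \<le> (\<integral>\<^sup>+y. norm (indicator P y * f y) \<partial>lborel)"
    using integral_norm_bound_ennreal[OF fi] by simp
  also have "\<dots> \<le> (\<integral>\<^sup>+y. ennreal a * indicator P y + ennreal b * (indicator P y * g y) \<partial>lborel)"
    by (intro nn_integral_mono) (auto simp: indicator_def bd)
  also have "\<dots> = ennreal a * emeasure lborel P + ennreal b * (\<integral>\<^sup>+y. indicator P y * g y \<partial>lborel)"
    using P gm by (subst nn_integral_add) (auto simp: nn_integral_cmult_indicator nn_integral_cmult)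
  finally have "ennreal \<bar>?I / m\<bar> \<le> ennreal (1 / m) * (ennreal a * ennreal m + ennreal b * (\<integral>\<^sup>+y. indicator P y * g y \<partial>lborel))"
    using mP by (simp add: mult_left_mono)
  also have "\<dots> = ennreal a + ennreal (b / m) * (\<integral>\<^sup>+y. indicator P y * g y \<partial>lborel)"
  proof -
    have "ennreal (1 / m) * (ennreal a * ennreal m) = ennreal a"
      using mP ab by (simp add: ennreal_mult[symmetric])
    moreover have "ennreal (1 / m) * ennreal b = ennreal (b / m)"
      using mP ab by (simp add: ennreal_mult[symmetric])
    ultimately show ?thesis by (simp add: distrib_left mult.assoc[symmetric])
  qed
  finally show ?thesis .
qed

lemma amgm_enn:
  assumes "(e::real) > 0"
  shows "ennreal \<bar>d\<bar> \<le> ennreal (e / 2) + ennreal (1 / (2 * e)) * ennreal (d\<^sup>2)"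
proof -
  have "ennreal \<bar>d\<bar> \<le> ennreal (e / 2 + 1 / (2 * e) * d\<^sup>2)"
    using amgm[OF assms, of d] by (intro ennreal_leI) simp
  also have "\<dots> = ennreal (e / 2) + ennreal (1 / (2 * e)) * ennreal (d\<^sup>2)"
    using assms by (simp add: ennreal_plus ennreal_mult[symmetric])
  finally show ?thesis .
qed

lemma avg_pt:
  fixes v :: "'a::euclidean_space \<Rightarrow> real"
  assumes vm[measurable]: "v \<in> borel_measurable borel" and Q[measurable]: "Q \<in> sets borel"
    and mQ: "emeasure lborel Q = ennreal m" "m > 0"
    and vi: "integrable lborel (\<lambda>y. indicator Q y * v y)" and e: "e > 0"
  shows "ennreal \<bar>v x - avg Q v\<bar> \<le> ennreal (e / 2) + ennreal (1 / (2 * e) / m) * (\<integral>\<^sup>+z. indicator Q z * ennreal ((v x - v z)\<^sup>2) \<partial>lborel)"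
proof -
  have meas: "measure lborel Q = m" using mQ by (simp add: measure_def)
  have ci: "integrable lborel (\<lambda>z. indicator Q z * v x)"
    using mQ by (intro integrable_mult_left integrable_real_indicator) auto
  have ci': "integrable lborel (\<lambda>z. v x * indicator Q z)"
    using ci by (simp add: mult.commute)
  have fi: "integrable lborel (\<lambda>z. indicator Q z * (v x - v z))"
    using Bochner_Integration.integrable_diff[OF ci' vi] by (simp add: algebra_simps)
  have "(\<integral>z. indicator Q z * (v x - v z) \<partial>lborel) = (\<integral>z. v x * indicator Q z \<partial>lborel) - (\<integral>z. indicator Q z * v z \<partial>lborel)"
    using Bochner_Integration.integral_diff[OF ci' vi] by (simp add: algebra_simps)
  also have "(\<integral>z. v x * indicator Q z \<partial>lborel) = v x * m"
    using mQ by (simp add: meas)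
  finally have eq: "(\<integral>z. indicator Q z * (v x - v z) \<partial>lborel) / m = v x - avg Q v"
    using mQ by (simp add: avg_def meas field_simps)
  have "ennreal \<bar>(\<integral>z. indicator Q z * (v x - v z) \<partial>lborel) / m\<bar> \<le> ennreal (e / 2) + ennreal (1 / (2 * e) / m) * (\<integral>\<^sup>+z. indicator Q z * ennreal ((v x - v z)\<^sup>2) \<partial>lborel)"
    by (rule avg_core[OF _ mQ fi]) (use e amgm_enn[OF e] in auto)
  then show ?thesis unfolding eq .
qed

lemma avg_pair:
  fixes v :: "'a::euclidean_space \<Rightarrow> real"
  assumes vm[measurable]: "v \<in> borel_measurable borel" and Q[measurable]: "Q \<in> sets borel"
    and mQ: "emeasure lborel Q = ennreal m" "m > 0"
    and vi: "integrable lborel (\<lambda>y. indicator Q y * v y)"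
    and P[measurable]: "P \<in> sets borel"
    and mP: "emeasure lborel P = ennreal n" "n > 0"
    and vi': "integrable lborel (\<lambda>y. indicator P y * v y)" and e: "e > 0"
  shows "ennreal \<bar>avg P v - avg Q v\<bar> \<le> ennreal (e / 2) + ennreal (1 / (2 * e) / m / n) *
     (\<integral>\<^sup>+y. indicator P y * (\<integral>\<^sup>+z. indicator Q z * ennreal ((v y - v z)\<^sup>2) \<partial>lborel) \<partial>lborel)"
proof -
  have meas: "measure lborel P = n" using mP by (simp add: measure_def)
  have ci: "integrable lborel (\<lambda>z. indicator P z * avg Q v)"
    using mP by (intro integrable_mult_left integrable_real_indicator) auto
  have fi: "integrable lborel (\<lambda>y. indicator P y * (v y - avg Q v))"
    using Bochner_Integration.integrable_diff[OF vi' ci] by (simp add: algebra_simps)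
  have "(\<integral>y. indicator P y * (v y - avg Q v) \<partial>lborel) = (\<integral>y. indicator P y * v y \<partial>lborel) - (\<integral>z. indicator P z * avg Q v \<partial>lborel)"
    using Bochner_Integration.integral_diff[OF vi' ci] by (simp add: algebra_simps)
  also have "(\<integral>z. indicator P z * avg Q v \<partial>lborel) = n * avg Q v"
    using mP by (simp add: meas)
  finally have eq: "(\<integral>y. indicator P y * (v y - avg Q v) \<partial>lborel) / n = avg P v - avg Q v"
    using mP by (simp add: avg_def meas field_simps)
  have "ennreal \<bar>(\<integral>y. indicator P y * (v y - avg Q v) \<partial>lborel) / n\<bar> \<le> ennreal (e / 2) + ennreal (1 / (2 * e) / m / n) *
     (\<integral>\<^sup>+y. indicator P y * (\<integral>\<^sup>+z. indicator Q z * ennreal ((v y - v z)\<^sup>2) \<partial>lborel) \<partial>lborel)"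
    by (rule avg_core[OF _ mP fi]) (use e mQ avg_pt[OF vm Q mQ vi e] in auto)
  then show ?thesis unfolding eq .
qed

lemma sq_le_kern:
  assumes "norm (y - z) \<le> D" "s \<ge> 0"
  shows "ennreal ((v y - v z)\<^sup>2) \<le> ennreal (D powr (real DIM('a) + 2 * s)) * ennreal (kern s v y (z::'a::euclidean_space))"
proof (cases "y = z")
  case True then show ?thesis by simp
next
  case False
  let ?a = "real DIM('a) + 2 * s"
  have pos: "norm (y - z) powr ?a > 0" using False by simp
  have "(v y - v z)\<^sup>2 = norm (y - z) powr ?a * kern s v y z"
    using pos by (simp add: kern_def)
  also have "\<dots> \<le> D powr ?a * kern s v y z"
    using assms by (intro mult_right_mono powr_mono2) (auto simp: kern_nonneg)
  finally show ?thesis using kern_nonneg[of s v y z]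
    by (simp add: ennreal_mult[symmetric] ennreal_leI)
qed

lemma dyad_step:
  fixes v :: "'a::euclidean_space \<Rightarrow> real"
  assumes vm[measurable]: "v \<in> borel_measurable borel" and rad: "radial v"
    and li: "\<And>c r. integrable lborel (\<lambda>y. indicator (ball c r) y * v y)"
    and x0: "x \<noteq> 0" and rho: "\<rho> > 0" and e: "e > 0" and s0: "s \<ge> 0"
    and G: "Gn s v \<le> ennreal \<Gamma>" and \<Gamma>: "\<Gamma> \<ge> 0"
  shows "\<bar>avg (ball x \<rho>) v - avg (ball x (\<rho>/2)) v\<bar> \<le> e / 2 + 1 / (2 * e) *
          (4 ^ DIM('a) * 2 powr (real DIM('a) + 2 * s) / (unit_ball_vol (real DIM('a)))\<^sup>2
           * \<rho> powr (2 * s - 1) * \<Gamma> / norm x ^ (DIM('a) - 1))"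
proof -
  let ?w = "unit_ball_vol (real DIM('a))" and ?N = "DIM('a)" and ?a = "real DIM('a) + 2 * s"
  have w0: "?w > 0" by simp
  define m where "m = ?w * (\<rho>/2) ^ ?N"
  define n where "n = ?w * \<rho> ^ ?N"
  have m0: "m > 0" "n > 0" using rho by (auto simp: m_def n_def)
  have mQ: "emeasure lborel (ball x (\<rho>/2)) = ennreal m" using rho by (simp add: ball_emeas m_def)
  have mP: "emeasure lborel (ball x \<rho>) = ennreal n" using rho by (simp add: ball_emeas n_def)
  define Eg where "Eg = 2 ^ ?N * \<rho> ^ (?N - 1) / norm x ^ (?N - 1)"
  have Eg0: "Eg \<ge> 0" using rho by (simp add: Eg_def)
  have "(\<integral>\<^sup>+y. indicator (ball x \<rho>) y * (\<integral>\<^sup>+z. indicator (ball x (\<rho>/2)) z * ennreal ((v y - v z)\<^sup>2) \<partial>lborel) \<partial>lborel)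
     \<le> (\<integral>\<^sup>+y. \<integral>\<^sup>+z. ennreal ((2 * \<rho>) powr ?a) * (indicator (ball x \<rho>) y * indicator (ball x \<rho>) z * ennreal (kern s v y z)) \<partial>lborel \<partial>lborel)"
  proof (intro nn_integral_mono)
    fix y
    show "indicator (ball x \<rho>) y * (\<integral>\<^sup>+z. indicator (ball x (\<rho>/2)) z * ennreal ((v y - v z)\<^sup>2) \<partial>lborel)
       \<le> (\<integral>\<^sup>+z. ennreal ((2 * \<rho>) powr ?a) * (indicator (ball x \<rho>) y * indicator (ball x \<rho>) z * ennreal (kern s v y z)) \<partial>lborel)"
    proof (cases "y \<in> ball x \<rho>")
      case False then show ?thesis by simp
    next
      case True
      have "(\<integral>\<^sup>+z. indicator (ball x (\<rho>/2)) z * ennreal ((v y - v z)\<^sup>2) \<partial>lborel)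
        \<le> (\<integral>\<^sup>+z. ennreal ((2 * \<rho>) powr ?a) * (indicator (ball x \<rho>) y * indicator (ball x \<rho>) z * ennreal (kern s v y z)) \<partial>lborel)"
      proof (intro nn_integral_mono)
        fix z
        show "indicator (ball x (\<rho>/2)) z * ennreal ((v y - v z)\<^sup>2) \<le> ennreal ((2 * \<rho>) powr ?a) * (indicator (ball x \<rho>) y * indicator (ball x \<rho>) z * ennreal (kern s v y z))"
        proof (cases "z \<in> ball x (\<rho>/2)")
          case False then show ?thesis by simp
        next
          case True2: True
          have "norm (y - z) \<le> 2 * \<rho>"
            using True True2 rho dist_triangle[of y z x] by (simp add: dist_norm norm_minus_commute)
          then have "ennreal ((v y - v z)\<^sup>2) \<le> ennreal ((2 * \<rho>) powr ?a) * ennreal (kern s v y z)"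
            by (rule sq_le_kern[OF _ s0])
          then show ?thesis using True True2 rho by (auto simp: indicator_def)
        qed
      qed
      then show ?thesis using True by simp
    qed
  qed
  also have "\<dots> = (\<integral>\<^sup>+y. ennreal ((2 * \<rho>) powr ?a) * \<integral>\<^sup>+z. Fk s v \<rho> x y z \<partial>lborel \<partial>lborel)"
    unfolding Fk_def[symmetric] by (intro nn_integral_cong nn_integral_cmult) measurable
  also have "\<dots> = ennreal ((2 * \<rho>) powr ?a) * Eb s v x \<rho>" unfolding Eb_def Fk_def[symmetric]
    by (rule nn_integral_cmult) measurable
  also have "\<dots> \<le> ennreal ((2 * \<rho>) powr ?a) * (ennreal Eg * Gn s v)"
    by (intro mult_left_mono Eb_bound[OF vm rad x0 rho, unfolded Eg_def[symmetric]]) simp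
  also have "\<dots> \<le> ennreal ((2 * \<rho>) powr ?a) * (ennreal Eg * ennreal \<Gamma>)"
    by (intro mult_left_mono G) auto
  also have "\<dots> = ennreal ((2 * \<rho>) powr ?a * Eg * \<Gamma>)"
  proof -
    have "ennreal ((2 * \<rho>) powr ?a * Eg * \<Gamma>) = ennreal ((2 * \<rho>) powr ?a * Eg) * ennreal \<Gamma>"
      using Eg0 \<Gamma> by (intro ennreal_mult) auto
    also have "ennreal ((2 * \<rho>) powr ?a * Eg) = ennreal ((2 * \<rho>) powr ?a) * ennreal Eg"
      using Eg0 by (intro ennreal_mult) auto
    finally show ?thesis by (simp only: mult.assoc)
  qed
  finally have DI: "(\<integral>\<^sup>+y. indicator (ball x \<rho>) y * (\<integral>\<^sup>+z. indicator (ball x (\<rho>/2)) z * ennreal ((v y - v z)\<^sup>2) \<partial>lborel) \<partial>lborel)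
     \<le> ennreal ((2 * \<rho>) powr ?a * Eg * \<Gamma>)" .
  have "ennreal \<bar>avg (ball x \<rho>) v - avg (ball x (\<rho>/2)) v\<bar> \<le> ennreal (e / 2) + ennreal (1 / (2 * e) / m / n) *
     (\<integral>\<^sup>+y. indicator (ball x \<rho>) y * (\<integral>\<^sup>+z. indicator (ball x (\<rho>/2)) z * ennreal ((v y - v z)\<^sup>2) \<partial>lborel) \<partial>lborel)"
    by (rule avg_pair[OF vm _ mQ(1) m0(1) li _ mP(1) m0(2) li e]) auto
  also have "\<dots> \<le> ennreal (e / 2) + ennreal (1 / (2 * e) / m / n) * ennreal ((2 * \<rho>) powr ?a * Eg * \<Gamma>)"
    by (intro add_left_mono mult_left_mono DI) auto
  also have "\<dots> = ennreal (e / 2 + 1 / (2 * e) / m / n * ((2 * \<rho>) powr ?a * Eg * \<Gamma>))"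
  proof -
    have q0: "1 / (2 * e) / m / n \<ge> 0" using e m0 by simp
    have p0: "(2 * \<rho>) powr ?a * Eg * \<Gamma> \<ge> 0" using Eg0 \<Gamma> by simp
    have "ennreal (e / 2 + 1 / (2 * e) / m / n * ((2 * \<rho>) powr ?a * Eg * \<Gamma>))
        = ennreal (e / 2) + ennreal (1 / (2 * e) / m / n * ((2 * \<rho>) powr ?a * Eg * \<Gamma>))"
      using e q0 p0 by (intro ennreal_plus) auto
    also have "ennreal (1 / (2 * e) / m / n * ((2 * \<rho>) powr ?a * Eg * \<Gamma>)) = ennreal (1 / (2 * e) / m / n) * ennreal ((2 * \<rho>) powr ?a * Eg * \<Gamma>)"
      using q0 p0 by (intro ennreal_mult) auto
    finally show ?thesis by simp
  qed
  finally have R0: "ennreal \<bar>avg (ball x \<rho>) v - avg (ball x (\<rho>/2)) v\<bar> \<le> ennreal (e / 2 + 1 / (2 * e) / m / n * ((2 * \<rho>) powr ?a * Eg * \<Gamma>))" .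
  have "e / 2 + 1 / (2 * e) / m / n * ((2 * \<rho>) powr ?a * Eg * \<Gamma>) \<ge> 0"
    using e m0 Eg0 \<Gamma> by (intro add_nonneg_nonneg mult_nonneg_nonneg) auto
  then have R: "\<bar>avg (ball x \<rho>) v - avg (ball x (\<rho>/2)) v\<bar> \<le> e / 2 + 1 / (2 * e) / m / n * ((2 * \<rho>) powr ?a * Eg * \<Gamma>)"
    using R0 ennreal_le_iff by blast
  have N1: "?N = Suc (?N - 1)" using DIM_positive[where 'a='a] by linarith
  have alg: "1 / (2 * e) / m / n * ((2 * \<rho>) powr ?a * Eg * \<Gamma>) = 1 / (2 * e) *
          (4 ^ ?N * 2 powr ?a / ?w\<^sup>2 * \<rho> powr (2 * s - 1) * \<Gamma> / norm x ^ (?N - 1))"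
  proof -
    have p1: "(2 * \<rho>) powr ?a = 2 powr ?a * (\<rho> ^ ?N * \<rho> powr (2 * s))"
      using rho by (simp add: powr_mult powr_add powr_realpow)
    have p2: "\<rho> powr (2 * s - 1) = \<rho> powr (2 * s) / \<rho>"
      using rho by (simp add: powr_diff)
    have p3: "\<rho> ^ ?N = \<rho> * \<rho> ^ (?N - 1)" by (metis N1 power_Suc)
    have p4: "(4::real) ^ ?N = 2 ^ ?N * 2 ^ ?N" by (simp add: power_mult_distrib[symmetric])
    define A where "A = \<rho> ^ (?N - 1)"
    define B where "B = \<rho> powr (2 * s)"
    define T where "T = (2::real) ^ ?N"
    define X where "X = norm x ^ (?N - 1)"
    have A0: "A > 0" "X > 0" "T > 0" using rho x0 by (auto simp: A_def X_def T_def)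
    have m': "m = ?w * (\<rho> * A / T)" unfolding m_def A_def T_def
      by (simp add: power_divide p3)
    have n': "n = ?w * (\<rho> * A)" unfolding n_def A_def by (simp add: p3)
    have E': "Eg = T * A / X" unfolding Eg_def T_def A_def X_def ..
    show ?thesis unfolding m' n' E' p1 p2 p4 B_def[symmetric] A_def[symmetric] T_def[symmetric] X_def[symmetric] p3
      using A0 rho e w0 by (simp add: field_simps power2_eq_square)
  qed
  show ?thesis using R unfolding alg .
qed

definition C0c :: "nat \<Rightarrow> real \<Rightarrow> real" where
  "C0c N s = 4 ^ N * 2 powr (real N + 2 * s) / (unit_ball_vol (real N))\<^sup>2"

definition Bcc :: "nat \<Rightarrow> real \<Rightarrow> real \<Rightarrow> real \<Rightarrow> real" where
  "Bcc N s \<Gamma> R = 1/2 + C0c N s * \<Gamma> / (2 * R ^ (N - 1))"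

definition telc :: "nat \<Rightarrow> real \<Rightarrow> real \<Rightarrow> real \<Rightarrow> real \<Rightarrow> real" where
  "telc N s \<Gamma> R r0 = Bcc N s \<Gamma> R * r0 powr (s - 1/2) / (1 - 2 powr (-(s - 1/2)))"

lemma helper_ee: "(e::real) > 0 \<Longrightarrow> 1 / (2 * e) * (c * (e * e) * g / X) = e / 2 * (c * g / X)"
  by (simp add: field_simps)

lemma helper_half: "(e::real) / 2 + e / 2 * (a / X) = e * (1/2 + a / (2 * X))"
  by (cases "X = 0") (simp_all add: field_simps)

lemma helper_geo: "(q::real) \<noteq> 1 \<Longrightarrow> A * (1 - q ^ j) / (1 - q) + A * q ^ j = A * (1 - q ^ Suc j) / (1 - q)"
proof -
  assume q: "q \<noteq> 1"
  then have "1 - q \<noteq> 0" by simp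
  then show ?thesis by (simp add: field_simps)
qed

lemma dyad_step2:
  fixes v :: "'a::euclidean_space \<Rightarrow> real"
  assumes vm[measurable]: "v \<in> borel_measurable borel" and rad: "radial v"
    and li: "\<And>c r. integrable lborel (\<lambda>y. indicator (ball c r) y * v y)"
    and R: "R > 0" "norm x \<ge> R" and rho: "\<rho> > 0" and s: "s > 1/2"
    and G: "Gn s v \<le> ennreal \<Gamma>" and \<Gamma>: "\<Gamma> \<ge> 0"
  shows "\<bar>avg (ball x \<rho>) v - avg (ball x (\<rho>/2)) v\<bar> \<le> \<rho> powr (s - 1/2) * Bcc DIM('a) s \<Gamma> R"
proof -
  let ?N = "DIM('a)" and ?b = "s - 1/2"
  have x0: "x \<noteq> 0" using R by auto
  define e where "e = \<rho> powr ?b"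
  have e0: "e > 0" using rho by (simp add: e_def)
  have C0: "C0c ?N s \<ge> 0" by (simp add: C0c_def)
  have "\<bar>avg (ball x \<rho>) v - avg (ball x (\<rho>/2)) v\<bar> \<le> e / 2 + 1 / (2 * e) *
          (C0c ?N s * \<rho> powr (2 * s - 1) * \<Gamma> / norm x ^ (?N - 1))"
    using dyad_step[OF vm rad li x0 rho e0 _ G \<Gamma>] s by (simp add: C0c_def)
  also have "1 / (2 * e) * (C0c ?N s * \<rho> powr (2 * s - 1) * \<Gamma> / norm x ^ (?N - 1))
      = e / 2 * (C0c ?N s * \<Gamma> / norm x ^ (?N - 1))"
  proof -
    have "2 * s - 1 = ?b + ?b" by simp
    then have "\<rho> powr (2 * s - 1) = e * e" unfolding e_def by (simp only: powr_add)
    then show ?thesis using e0 by (simp add: helper_ee)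
  qed
  also have "\<dots> \<le> e / 2 * (C0c ?N s * \<Gamma> / R ^ (?N - 1))"
    using e0 C0 \<Gamma> R by (intro mult_left_mono divide_left_mono power_mono mult_nonneg_nonneg mult_pos_pos zero_less_power) auto
  finally show ?thesis unfolding Bcc_def e_def by (simp only: helper_half)
qed

lemma dyad_tel:
  fixes v :: "'a::euclidean_space \<Rightarrow> real"
  assumes vm[measurable]: "v \<in> borel_measurable borel" and rad: "radial v"
    and li: "\<And>c r. integrable lborel (\<lambda>y. indicator (ball c r) y * v y)"
    and R: "R > 0" "norm x \<ge> R" and rho: "r0 > 0" and s: "s > 1/2"
    and G: "Gn s v \<le> ennreal \<Gamma>" and \<Gamma>: "\<Gamma> \<ge> 0"
  shows "\<bar>avg (ball x (r0 / 2 ^ j)) v - avg (ball x r0) v\<bar> \<le> telc DIM('a) s \<Gamma> R r0"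
proof -
  let ?N = "DIM('a)" and ?b = "s - 1/2"
  define q where "q = 2 powr (- ?b)"
  have "q < 2 powr 0" unfolding q_def using s by (intro powr_less_mono) auto
  then have q: "q > 0" "q < 1" by (auto simp: q_def)
  have B0: "Bcc ?N s \<Gamma> R \<ge> 0" using R \<Gamma> by (simp add: Bcc_def C0c_def)
  have rj: "(r0 / 2 ^ j) powr ?b = r0 powr ?b * q ^ j" for j :: nat
  proof -
    have "(2::real) ^ j = 2 powr (real j)" by (simp add: powr_realpow)
    then have A: "((2::real) ^ j) powr ?b = 2 powr (real j * ?b)" by (simp add: powr_powr)
    have B: "q ^ j = inverse (2 powr (real j * ?b))"
    proof -
      have "q ^ j = 2 powr (real j * (- ?b))" unfolding q_def by (simp add: powr_power)
      also have "real j * (- ?b) = - (real j * ?b)" by (simp add: algebra_simps)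
      finally show ?thesis by (simp only: powr_minus)
    qed
    have "(r0 / 2 ^ j) powr ?b = r0 powr ?b / ((2::real) ^ j) powr ?b" by (rule powr_divide)
    also have "\<dots> = r0 powr ?b * inverse (2 powr (real j * ?b))" unfolding A by (simp only: divide_inverse)
    also have "\<dots> = r0 powr ?b * q ^ j" unfolding B ..
    finally show ?thesis .
  qed
  have main: "\<bar>avg (ball x (r0 / 2 ^ j)) v - avg (ball x r0) v\<bar> \<le> Bcc ?N s \<Gamma> R * r0 powr ?b * (1 - q ^ j) / (1 - q)" for j
  proof (induction j)
    case 0 then show ?case by simp
  next
    case (Suc j)
    have st: "\<bar>avg (ball x (r0 / 2 ^ j)) v - avg (ball x (r0 / 2 ^ j / 2)) v\<bar> \<le> (r0 / 2 ^ j) powr ?b * Bcc ?N s \<Gamma> R"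
      by (rule dyad_step2[OF vm rad li R _ s G \<Gamma>]) (use rho in simp)
    have e: "r0 / 2 ^ j / 2 = r0 / 2 ^ Suc j" by simp
    have "\<bar>avg (ball x (r0 / 2 ^ Suc j)) v - avg (ball x r0) v\<bar> \<le>
        \<bar>avg (ball x (r0 / 2 ^ j)) v - avg (ball x r0) v\<bar> + \<bar>avg (ball x (r0 / 2 ^ j)) v - avg (ball x (r0 / 2 ^ j / 2)) v\<bar>"
      unfolding e by linarith
    also have "\<dots> \<le> Bcc ?N s \<Gamma> R * r0 powr ?b * (1 - q ^ j) / (1 - q) + r0 powr ?b * q ^ j * Bcc ?N s \<Gamma> R"
      using Suc st unfolding rj by (simp add: mult.commute mult.left_commute)
    also have "\<dots> = Bcc ?N s \<Gamma> R * r0 powr ?b * (1 - q ^ Suc j) / (1 - q)"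
      using q helper_geo[of q "Bcc ?N s \<Gamma> R * r0 powr ?b" j] by (simp add: ac_simps)
    finally show ?case .
  qed
  have "Bcc ?N s \<Gamma> R * r0 powr ?b * (1 - q ^ j) / (1 - q) \<le> Bcc ?N s \<Gamma> R * r0 powr ?b / (1 - q)"
  proof -
    have "q ^ j \<ge> 0" using q by simp
    then have "Bcc ?N s \<Gamma> R * r0 powr ?b * (1 - q ^ j) \<le> Bcc ?N s \<Gamma> R * r0 powr ?b * 1"
      using B0 by (intro mult_left_mono) auto
    then show ?thesis using q by (intro divide_right_mono) auto
  qed
  then show ?thesis using main[of j] unfolding telc_def q_def by linarith
qed

lemma dbl_cmult:
  assumes vm[measurable]: "v \<in> borel_measurable borel"
  shows "(\<integral>\<^sup>+y. \<integral>\<^sup>+z. ennreal c * ennreal (kern s v y z) \<partial>lborel \<partial>lborel) = ennreal c * Gn s (v::'a::euclidean_space \<Rightarrow> real)"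
proof -
  have "(\<integral>\<^sup>+y. \<integral>\<^sup>+z. ennreal c * ennreal (kern s v y z) \<partial>lborel \<partial>lborel)
      = (\<integral>\<^sup>+y. ennreal c * \<integral>\<^sup>+z. ennreal (kern s v y z) \<partial>lborel \<partial>lborel)"
    by (intro nn_integral_cong nn_integral_cmult) measurable
  also have "\<dots> = ennreal c * Gn s v" unfolding Gn_def
    by (rule nn_integral_cmult) measurable
  finally show ?thesis .
qed

lemma top_cmp:
  fixes v :: "'a::euclidean_space \<Rightarrow> real"
  assumes vm[measurable]: "v \<in> borel_measurable borel"
    and li: "\<And>c r. integrable lborel (\<lambda>y. indicator (ball c r) y * v y)"
    and r0: "r0 > 0" and de: "\<delta> > 0" and nx: "norm x \<le> Mr" and np: "norm p + \<delta> \<le> Mr"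
    and s0: "s \<ge> 0" and G: "Gn s v \<le> ennreal \<Gamma>" and \<Gamma>: "\<Gamma> \<ge> 0"
  shows "\<bar>avg (ball x r0) v - avg (ball p \<delta>) v\<bar> \<le> 1/2 + 1/2 / (unit_ball_vol (real DIM('a)) * \<delta> ^ DIM('a))
      / (unit_ball_vol (real DIM('a)) * r0 ^ DIM('a)) * ((2 * Mr + r0) powr (real DIM('a) + 2 * s) * \<Gamma>)"
proof -
  let ?w = "unit_ball_vol (real DIM('a))" and ?N = "DIM('a)" and ?a = "real DIM('a) + 2 * s"
  define m where "m = ?w * \<delta> ^ ?N"
  define n where "n = ?w * r0 ^ ?N"
  have m0: "m > 0" "n > 0" using r0 de by (auto simp: m_def n_def)
  have mQ: "emeasure lborel (ball p \<delta>) = ennreal m" using de by (simp add: ball_emeas m_def)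
  have mP: "emeasure lborel (ball x r0) = ennreal n" using r0 by (simp add: ball_emeas n_def)
  let ?D = "2 * Mr + r0"
  have "(\<integral>\<^sup>+y. indicator (ball x r0) y * (\<integral>\<^sup>+z. indicator (ball p \<delta>) z * ennreal ((v y - v z)\<^sup>2) \<partial>lborel) \<partial>lborel)
     \<le> (\<integral>\<^sup>+y. \<integral>\<^sup>+z. ennreal (?D powr ?a) * ennreal (kern s v y z) \<partial>lborel \<partial>lborel)"
  proof (intro nn_integral_mono)
    fix y
    show "indicator (ball x r0) y * (\<integral>\<^sup>+z. indicator (ball p \<delta>) z * ennreal ((v y - v z)\<^sup>2) \<partial>lborel)
       \<le> (\<integral>\<^sup>+z. ennreal (?D powr ?a) * ennreal (kern s v y z) \<partial>lborel)"
    proof (cases "y \<in> ball x r0")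
      case False then show ?thesis by simp
    next
      case True
      have "(\<integral>\<^sup>+z. indicator (ball p \<delta>) z * ennreal ((v y - v z)\<^sup>2) \<partial>lborel)
        \<le> (\<integral>\<^sup>+z. ennreal (?D powr ?a) * ennreal (kern s v y z) \<partial>lborel)"
      proof (intro nn_integral_mono)
        fix z
        show "indicator (ball p \<delta>) z * ennreal ((v y - v z)\<^sup>2) \<le> ennreal (?D powr ?a) * ennreal (kern s v y z)"
        proof (cases "z \<in> ball p \<delta>")
          case False then show ?thesis by simp
        next
          case True2: True
          have "norm y \<le> Mr + r0" using True nx norm_triangle_ineq[of x "y - x"]
            by (simp add: dist_norm norm_minus_commute)
          moreover have "norm z \<le> Mr" using True2 np norm_triangle_ineq[of p "z - p"]
            by (simp add: dist_norm norm_minus_commute)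
          ultimately have "norm (y - z) \<le> ?D" using norm_triangle_ineq4[of y z] by linarith
          then show ?thesis using True2 by (simp add: sq_le_kern[OF _ s0])
        qed
      qed
      then show ?thesis using True by simp
    qed
  qed
  also have "\<dots> = ennreal (?D powr ?a) * Gn s v" by (rule dbl_cmult[OF vm])
  also have "\<dots> \<le> ennreal (?D powr ?a) * ennreal \<Gamma>" by (intro mult_left_mono G) auto
  also have "\<dots> = ennreal (?D powr ?a * \<Gamma>)" using \<Gamma> by (simp add: ennreal_mult)
  finally have DI: "(\<integral>\<^sup>+y. indicator (ball x r0) y * (\<integral>\<^sup>+z. indicator (ball p \<delta>) z * ennreal ((v y - v z)\<^sup>2) \<partial>lborel) \<partial>lborel)
     \<le> ennreal (?D powr ?a * \<Gamma>)" .
  have one: "(1::real) > 0" by simp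
  have "ennreal \<bar>avg (ball x r0) v - avg (ball p \<delta>) v\<bar> \<le> ennreal (1 / 2) + ennreal (1 / (2 * 1) / m / n) *
     (\<integral>\<^sup>+y. indicator (ball x r0) y * (\<integral>\<^sup>+z. indicator (ball p \<delta>) z * ennreal ((v y - v z)\<^sup>2) \<partial>lborel) \<partial>lborel)"
    using avg_pair[OF vm _ mQ(1) m0(1) li _ mP(1) m0(2) li one] by simp
  also have "\<dots> \<le> ennreal (1 / 2) + ennreal (1 / (2 * 1) / m / n) * ennreal (?D powr ?a * \<Gamma>)"
    by (intro add_left_mono mult_left_mono DI) auto
  also have "\<dots> = ennreal (1/2 + 1/2 / m / n * (?D powr ?a * \<Gamma>))"
  proof -
    have q0: "1/2 / m / n \<ge> 0" "?D powr ?a * \<Gamma> \<ge> 0" using m0 \<Gamma> by auto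
    have "ennreal (1/2 + 1/2 / m / n * (?D powr ?a * \<Gamma>)) = ennreal (1/2) + ennreal (1/2 / m / n * (?D powr ?a * \<Gamma>))"
      using q0 by (intro ennreal_plus) auto
    also have "ennreal (1/2 / m / n * (?D powr ?a * \<Gamma>)) = ennreal (1/2 / m / n) * ennreal (?D powr ?a * \<Gamma>)"
      using q0 by (intro ennreal_mult) auto
    finally show ?thesis by simp
  qed
  finally have R0: "ennreal \<bar>avg (ball x r0) v - avg (ball p \<delta>) v\<bar> \<le> ennreal (1/2 + 1/2 / m / n * (?D powr ?a * \<Gamma>))" .
  have "1/2 + 1/2 / m / n * (?D powr ?a * \<Gamma>) \<ge> 0" using m0 \<Gamma> by simp
  then show ?thesis using R0 ennreal_le_iff unfolding m_def n_def by blast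
qed

lemma loc_energy:
  fixes v :: "'a::euclidean_space \<Rightarrow> real"
  assumes vm[measurable]: "v \<in> borel_measurable borel" and s0: "s \<ge> 0"
  shows "(\<integral>\<^sup>+x. \<integral>\<^sup>+z. indicator (ball x \<rho>) z * ennreal ((v x - v z)\<^sup>2) \<partial>lborel \<partial>lborel)
     \<le> ennreal (\<rho> powr (real DIM('a) + 2 * s)) * Gn s v"
proof -
  have "(\<integral>\<^sup>+x. \<integral>\<^sup>+z. indicator (ball x \<rho>) z * ennreal ((v x - v z)\<^sup>2) \<partial>lborel \<partial>lborel)
     \<le> (\<integral>\<^sup>+x. \<integral>\<^sup>+z. ennreal (\<rho> powr (real DIM('a) + 2 * s)) * ennreal (kern s v x z) \<partial>lborel \<partial>lborel)"
  proof (intro nn_integral_mono)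
    fix x z :: 'a
    show "indicator (ball x \<rho>) z * ennreal ((v x - v z)\<^sup>2) \<le> ennreal (\<rho> powr (real DIM('a) + 2 * s)) * ennreal (kern s v x z)"
    proof (cases "z \<in> ball x \<rho>")
      case False then show ?thesis by simp
    next
      case True
      then have "norm (x - z) \<le> \<rho>" by (simp add: dist_norm)
      then show ?thesis using True by (simp add: sq_le_kern[OF _ s0])
    qed
  qed
  also have "\<dots> = ennreal (\<rho> powr (real DIM('a) + 2 * s)) * Gn s v" by (rule dbl_cmult[OF vm])
  finally show ?thesis .
qed

definition topc :: "nat \<Rightarrow> real \<Rightarrow> real \<Rightarrow> real \<Rightarrow> real \<Rightarrow> real" where
  "topc N s \<Gamma> Mr \<delta> = 1/2 + 1/2 / (unit_ball_vol (real N) * \<delta> ^ N)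
      / (unit_ball_vol (real N) * 1 ^ N) * ((2 * Mr + 1) powr (real N + 2 * s) * \<Gamma>)"

lemma helper_abc: "(b::real) \<noteq> 0 \<Longrightarrow> (a * b / c) * g / (2 * b) = a / 2 * (g / c)"
  by (cases "c = 0") (simp_all add: field_simps)

lemma small_j:
  assumes "t > 0" "s > 1/2"
  shows "\<exists>j::nat. (1 / 2 ^ j :: real) powr (2 * s) < t"
proof -
  obtain j :: nat where j: "(1/2::real) ^ j < t" using real_arch_pow_inv[of t "1/2"] assms by auto
  have "(1 / 2 ^ j :: real) powr (2 * s) \<le> (1 / 2 ^ j) powr 1"
    using assms by (intro powr_mono') auto
  also have "\<dots> = (1/2) ^ j" by (simp add: power_one_over)
  finally show ?thesis using j by (intro exI[of _ j]) linarith
qed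

lemma annulus_ae:
  fixes v :: "'a::euclidean_space \<Rightarrow> real"
  assumes vm[measurable]: "v \<in> borel_measurable borel" and rad: "radial v"
    and li: "\<And>c r. integrable lborel (\<lambda>y. indicator (ball c r) y * v y)"
    and s: "1/2 < s" and G: "Gn s v \<le> ennreal \<Gamma>" and \<Gamma>: "\<Gamma> \<ge> 0"
    and R: "R > 0" and de: "\<delta> > 0" and np: "norm p + \<delta> \<le> Mr"
    and Ad: "\<bar>avg (ball p \<delta>) v\<bar> \<le> Ad"
  shows "AE x in lborel. x \<in> ball 0 Mr - ball 0 R \<longrightarrow> \<bar>v x\<bar> \<le> Ad + topc DIM('a) s \<Gamma> Mr \<delta> + telc DIM('a) s \<Gamma> R 1"
proof -
  let ?w = "unit_ball_vol (real DIM('a))" and ?N = "DIM('a)" and ?a = "real DIM('a) + 2 * s"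
  define Mb where "Mb = Ad + topc DIM('a) s \<Gamma> Mr \<delta> + telc DIM('a) s \<Gamma> R 1"
  define A where "A = ball (0::'a) Mr - ball 0 R"
  have Asets[measurable]: "A \<in> sets borel" by (simp add: A_def)
  have s0: "s \<ge> 0" using s by simp
  have w0: "?w > 0" by simp
  have Mr0: "Mr > 0" using np de norm_ge_zero[of p] by linarith
  have aj: "\<bar>avg (ball x (1 / 2 ^ j)) v\<bar> \<le> Mb" if x: "x \<in> A" for x j
  proof -
    have nx: "norm x \<ge> R" "norm x \<le> Mr" using x by (auto simp: A_def)
    have "\<bar>avg (ball x (1 / 2 ^ j)) v - avg (ball x 1) v\<bar> \<le> telc DIM('a) s \<Gamma> R 1"
      using dyad_tel[OF vm rad li R nx(1) _ s G \<Gamma>, of 1 j] by simp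
    moreover have "\<bar>avg (ball x 1) v - avg (ball p \<delta>) v\<bar> \<le> topc DIM('a) s \<Gamma> Mr \<delta>"
      using top_cmp[OF vm li _ de nx(2) np s0 G \<Gamma>, of 1] unfolding topc_def by simp
    ultimately show ?thesis using Ad unfolding Mb_def by linarith
  qed
  define f where "f x = indicator A x * ennreal (max 0 (\<bar>v x\<bar> - Mb))" for x
  have fm[measurable]: "f \<in> borel_measurable lborel" unfolding f_def by measurable
  define LA where "LA = ?w * Mr ^ ?N"
  have LA0: "LA > 0" using Mr0 by (simp add: LA_def)
  have eA: "emeasure lborel A \<le> ennreal LA"
  proof -
    have "emeasure lborel A \<le> emeasure lborel (ball (0::'a) Mr)"
      by (intro emeasure_mono) (auto simp: A_def)
    then show ?thesis using Mr0 by (simp add: ball_emeas LA_def)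
  qed
  have intb: "(\<integral>\<^sup>+x. f x \<partial>lborel) \<le> ennreal (e / 2 * LA + 1 / (2 * e) / (?w * (1 / 2 ^ j) ^ ?N) * ((1 / 2 ^ j) powr ?a * \<Gamma>))"
    if e: "e > 0" for e :: real and j :: nat
  proof -
    define \<rho> where "\<rho> = (1 / 2 ^ j :: real)"
    have rho: "\<rho> > 0" by (simp add: \<rho>_def)
    define c where "c = 1 / (2 * e) / (?w * \<rho> ^ ?N)"
    have c0: "c \<ge> 0" using e rho by (simp add: c_def)
    have mQ: "emeasure lborel (ball x \<rho>) = ennreal (?w * \<rho> ^ ?N)" for x :: 'a
      using rho by (simp add: ball_emeas)
    have pt: "f x \<le> ennreal (e / 2) * indicator A x + ennreal c * (\<integral>\<^sup>+z. indicator (ball x \<rho>) z * ennreal ((v x - v z)\<^sup>2) \<partial>lborel)" for x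
    proof (cases "x \<in> A")
      case False then show ?thesis by (simp add: f_def)
    next
      case True
      have "max 0 (\<bar>v x\<bar> - Mb) \<le> \<bar>v x - avg (ball x \<rho>) v\<bar>"
        using aj[OF True, of j] unfolding \<rho>_def by linarith
      then have "ennreal (max 0 (\<bar>v x\<bar> - Mb)) \<le> ennreal \<bar>v x - avg (ball x \<rho>) v\<bar>" by (rule ennreal_leI)
      also have "\<dots> \<le> ennreal (e / 2) + ennreal (1 / (2 * e) / (?w * \<rho> ^ ?N)) * (\<integral>\<^sup>+z. indicator (ball x \<rho>) z * ennreal ((v x - v z)\<^sup>2) \<partial>lborel)"
        by (rule avg_pt[OF vm _ mQ _ li e]) (use rho in auto)
      finally show ?thesis using True by (simp add: f_def c_def)
    qed
    have [measurable]: "(\<lambda>x. \<integral>\<^sup>+z. indicator (ball x \<rho>) z * ennreal ((v x - v z)\<^sup>2) \<partial>lborel) \<in> borel_measurable lborel"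
      unfolding indicator_def mem_ball by measurable
    have "(\<integral>\<^sup>+x. f x \<partial>lborel) \<le> (\<integral>\<^sup>+x. ennreal (e / 2) * indicator A x + ennreal c * (\<integral>\<^sup>+z. indicator (ball x \<rho>) z * ennreal ((v x - v z)\<^sup>2) \<partial>lborel) \<partial>lborel)"
      by (intro nn_integral_mono pt)
    also have "\<dots> = ennreal (e / 2) * emeasure lborel A + ennreal c * (\<integral>\<^sup>+x. \<integral>\<^sup>+z. indicator (ball x \<rho>) z * ennreal ((v x - v z)\<^sup>2) \<partial>lborel \<partial>lborel)"
      by (subst nn_integral_add) (auto simp: nn_integral_cmult_indicator nn_integral_cmult)
    also have "\<dots> \<le> ennreal (e / 2) * ennreal LA + ennreal c * (ennreal (\<rho> powr ?a) * Gn s v)"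
      by (intro add_mono mult_left_mono eA loc_energy[OF vm s0]) auto
    also have "\<dots> \<le> ennreal (e / 2) * ennreal LA + ennreal c * (ennreal (\<rho> powr ?a) * ennreal \<Gamma>)"
      by (intro add_mono mult_left_mono G) auto
    also have "\<dots> = ennreal (e / 2 * LA + c * (\<rho> powr ?a * \<Gamma>))"
    proof -
      have q0: "e / 2 * LA \<ge> 0" "c * (\<rho> powr ?a * \<Gamma>) \<ge> 0" using e LA0 c0 \<Gamma> by auto
      have "ennreal (e / 2 * LA + c * (\<rho> powr ?a * \<Gamma>)) = ennreal (e / 2 * LA) + ennreal (c * (\<rho> powr ?a * \<Gamma>))"
        using q0 by (intro ennreal_plus) auto
      also have "ennreal (e / 2 * LA) = ennreal (e / 2) * ennreal LA" using e LA0 by (intro ennreal_mult) auto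
      also have "ennreal (c * (\<rho> powr ?a * \<Gamma>)) = ennreal c * ennreal (\<rho> powr ?a * \<Gamma>)"
        using c0 \<Gamma> by (intro ennreal_mult) auto
      also have "ennreal (\<rho> powr ?a * \<Gamma>) = ennreal (\<rho> powr ?a) * ennreal \<Gamma>"
        using \<Gamma> by (intro ennreal_mult) auto
      finally show ?thesis by simp
    qed
    finally show ?thesis unfolding c_def \<rho>_def .
  qed
  have zero: "(\<integral>\<^sup>+x. f x \<partial>lborel) \<le> 0"
  proof (rule ennreal_le_epsilon)
    fix \<eta> :: real assume \<eta>: "0 < \<eta>"
    define e where "e = \<eta> / (LA + 1)"
    have e0: "e > 0" using \<eta> LA0 by (simp add: e_def)
    have eLA: "e / 2 * LA \<le> \<eta> / 2"
    proof -
      have "e * LA \<le> \<eta>" unfolding e_def using \<eta> LA0 by (simp add: field_simps)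
      then show ?thesis by simp
    qed
    define t where "t = \<eta> * e * ?w / (\<Gamma> + 1)"
    have t0: "t > 0" using \<eta> e0 w0 \<Gamma> by (simp add: t_def)
    obtain j :: nat where j: "(1 / 2 ^ j :: real) powr (2 * s) < t" using small_j[OF t0 s] by blast
    define \<rho> where "\<rho> = (1 / 2 ^ j :: real)"
    have rho: "\<rho> > 0" by (simp add: \<rho>_def)
    have "1 / (2 * e) / (?w * \<rho> ^ ?N) * (\<rho> powr ?a * \<Gamma>) = \<rho> powr (2 * s) * \<Gamma> / (2 * e * ?w)"
    proof -
      have "\<rho> powr ?a = \<rho> ^ ?N * \<rho> powr (2 * s)" using rho by (simp add: powr_add powr_realpow)
      then show ?thesis using rho e0 w0 by (simp add: field_simps)
    qed
    also have "\<dots> \<le> t * \<Gamma> / (2 * e * ?w)"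
      using j \<Gamma> e0 w0 unfolding \<rho>_def by (intro divide_right_mono mult_right_mono) auto
    also have "\<dots> \<le> \<eta> / 2"
    proof -
      have nz: "?w \<noteq> 0" "\<Gamma> + 1 \<noteq> 0" "e \<noteq> 0" using w0 \<Gamma> e0 by linarith+
      have tt: "t = \<eta> * (e * ?w) / (\<Gamma> + 1)" by (simp add: t_def mult.assoc)
      have "t * \<Gamma> / (2 * e * ?w) = \<eta> / 2 * (\<Gamma> / (\<Gamma> + 1))" unfolding tt
        using helper_abc[of "e * ?w" \<eta> "\<Gamma> + 1" \<Gamma>] nz by (simp add: mult.assoc)
      also have "\<dots> \<le> \<eta> / 2 * 1" using \<eta> \<Gamma> by (intro mult_left_mono) auto
      finally show ?thesis by simp
    qed
    finally have "1 / (2 * e) / (?w * \<rho> ^ ?N) * (\<rho> powr ?a * \<Gamma>) \<le> \<eta> / 2" .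
    then have "e / 2 * LA + 1 / (2 * e) / (?w * (1 / 2 ^ j) ^ ?N) * ((1 / 2 ^ j) powr ?a * \<Gamma>) \<le> \<eta>"
      using eLA unfolding \<rho>_def by linarith
    then have "ennreal (e / 2 * LA + 1 / (2 * e) / (?w * (1 / 2 ^ j) ^ ?N) * ((1 / 2 ^ j) powr ?a * \<Gamma>)) \<le> ennreal \<eta>"
      by (rule ennreal_leI)
    with intb[OF e0, of j] show "(\<integral>\<^sup>+x. f x \<partial>lborel) \<le> 0 + ennreal \<eta>" by simp
  qed
  then have "(\<integral>\<^sup>+x. f x \<partial>lborel) = 0" by simp
  then have "AE x in lborel. f x = 0" using nn_integral_0_iff_AE[OF fm] by simp
  then show ?thesis
  proof (rule AE_mp, intro AE_I2 impI)
    fix x assume fx: "f x = 0" and xA: "x \<in> ball 0 Mr - ball 0 R"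
    then have "ennreal (max 0 (\<bar>v x\<bar> - Mb)) = 0" by (simp add: f_def A_def)
    then show "\<bar>v x\<bar> \<le> Ad + topc DIM('a) s \<Gamma> Mr \<delta> + telc DIM('a) s \<Gamma> R 1"
      unfolding Mb_def[symmetric] by (simp add: ennreal_eq_0_iff)
  qed
qed

lemma dyad_out:
  assumes "(r::real) \<ge> 1"
  shows "\<exists>k::nat. 2 ^ k \<le> r \<and> r < 2 ^ (k + 1)"
proof -
  obtain n :: nat where n: "r < 2 ^ n" using real_arch_pow[of 2 r] by auto
  have Pn: "r < 2 ^ (n + 1)" using n by (smt (verit) one_le_numeral power_increasing le_add1)
  define k where "k = (LEAST k. r < (2::real) ^ (k + 1))"
  have Pk: "r < 2 ^ (k + 1)" unfolding k_def by (rule LeastI[of _ n]) (rule Pn)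
  have "2 ^ k \<le> r"
  proof (cases k)
    case 0 then show ?thesis using assms by simp
  next
    case (Suc j)
    have "\<not> r < 2 ^ (j + 1)"
    proof
      assume "r < 2 ^ (j + 1)"
      then have "k \<le> j" unfolding k_def by (rule Least_le)
      then show False using Suc by simp
    qed
    then show ?thesis using Suc by simp
  qed
  then show ?thesis using Pk by blast
qed

lemma dyad_in:
  assumes "(r::real) > 0" "r < 1"
  shows "\<exists>k::nat. (1/2) ^ (k + 1) \<le> r \<and> r < (1/2) ^ k"
proof -
  obtain n :: nat where n: "(1/2) ^ n < r" using real_arch_pow_inv[of r "1/2"] assms by auto
  have "(1/2::real) ^ (n + 1) \<le> (1/2) ^ n" by (rule power_decreasing) auto
  then have Pn: "(1/2::real) ^ (n + 1) \<le> r" using n by linarith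
  define k where "k = (LEAST k. (1/2::real) ^ (k + 1) \<le> r)"
  have Pk: "(1/2::real) ^ (k + 1) \<le> r" unfolding k_def by (rule LeastI[of _ n]) (rule Pn)
  have "r < (1/2) ^ k"
  proof (cases k)
    case 0 then show ?thesis using assms by simp
  next
    case (Suc j)
    have "\<not> (1/2::real) ^ (j + 1) \<le> r"
    proof
      assume "(1/2::real) ^ (j + 1) \<le> r"
      then have "k \<le> j" unfolding k_def by (rule Least_le)
      then show False using Suc by simp
    qed
    then show ?thesis using Suc by simp
  qed
  then show ?thesis using Pk by blast
qed

lemma powr_pow_swap: "(x::real) > 0 \<Longrightarrow> (x ^ n) powr c = (x powr c) ^ n"
proof -
  assume x: "x > 0"
  have "(x ^ n) powr c = (x powr (real n)) powr c" using x by (simp add: powr_realpow)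
  also have "\<dots> = x powr (real n * c)" by (simp add: powr_powr)
  also have "\<dots> = (x powr c) ^ n" using x by (simp add: powr_power mult.commute)
  finally show ?thesis .
qed

lemma geo_enn_finite:
  assumes "(c::real) \<ge> 0" "q \<ge> 0" "q < 1"
  shows "(\<Sum>k. ennreal (c * q ^ k)) < \<infinity>"
proof -
  have sm: "summable (\<lambda>k. c * q ^ k)" using assms by (intro summable_mult summable_geometric) auto
  have "(\<Sum>k. ennreal (c * q ^ k)) = ennreal (\<Sum>k. c * q ^ k)"
    using assms sm by (intro suminf_ennreal2) auto
  then show ?thesis by simp
qed

lemma int_out:
  assumes a: "a > real DIM('a)"
  shows "(\<integral>\<^sup>+z. indicator (- ball (0::'a::euclidean_space) 1) z * ennreal (norm z powr (- a)) \<partial>lborel) < \<infinity>"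
proof -
  let ?w = "unit_ball_vol (real DIM('a))" and ?N = "DIM('a)"
  define q where "q = 2 powr (- a) * 2 ^ ?N"
  define t where "t k z = ennreal ((2 powr (- a)) ^ k) * indicator (ball (0::'a) (2 ^ (k + 1))) z" for k z
  have pt: "indicator (- ball (0::'a) 1) z * ennreal (norm z powr (- a)) \<le> (\<Sum>k. t k z)" for z
  proof (cases "norm z < 1")
    case True then show ?thesis by (simp add: indicator_def)
  next
    case False
    then obtain k :: nat where k: "2 ^ k \<le> norm z" "norm z < 2 ^ (k + 1)" using dyad_out[of "norm z"] by auto
    have "norm z powr (- a) \<le> (2 ^ k) powr (- a)" using k a by (intro powr_mono2') auto
    also have "\<dots> = (2 powr (- a)) ^ k" by (rule powr_pow_swap) simp
    finally have "indicator (- ball (0::'a) 1) z * ennreal (norm z powr (- a)) \<le> t k z"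
      using k False by (auto simp: t_def indicator_def intro: ennreal_leI)
    also have "t k z \<le> (\<Sum>k. t k z)"
      using sum_le_suminf[OF summableI, of "{k}" "\<lambda>k. t k z"] by simp
    finally show ?thesis .
  qed
  have "(\<integral>\<^sup>+z. indicator (- ball (0::'a) 1) z * ennreal (norm z powr (- a)) \<partial>lborel) \<le> (\<integral>\<^sup>+z. (\<Sum>k. t k z) \<partial>lborel)"
    by (intro nn_integral_mono pt)
  also have "\<dots> = (\<Sum>k. \<integral>\<^sup>+z. t k z \<partial>lborel)"
    by (rule nn_integral_suminf) (simp add: t_def)
  also have "\<dots> = (\<Sum>k. ennreal (?w * 2 ^ ?N * q ^ k))"
  proof (intro suminf_cong)
    fix k
    have "(\<integral>\<^sup>+z. t k z \<partial>lborel) = ennreal ((2 powr (- a)) ^ k) * emeasure lborel (ball (0::'a) (2 ^ (k + 1)))"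
      unfolding t_def by (rule nn_integral_cmult_indicator) simp
    also have "\<dots> = ennreal ((2 powr (- a)) ^ k) * ennreal (?w * (2 ^ (k + 1)) ^ ?N)"
      by (simp add: ball_emeas)
    also have "\<dots> = ennreal ((2 powr (- a)) ^ k * (?w * (2 ^ (k + 1)) ^ ?N))"
      by (simp add: ennreal_mult)
    also have "(2 powr (- a)) ^ k * (?w * (2 ^ (k + 1)) ^ ?N) = ?w * 2 ^ ?N * q ^ k"
    proof -
      have e1: "((2::real) ^ (k + 1)) ^ ?N = 2 ^ ?N * (2 ^ ?N) ^ k"
        by (metis power_add power_mult power_one_right mult.commute power_mult_distrib)
      have e2: "q ^ k = (2 powr (- a)) ^ k * (2 ^ ?N) ^ k" unfolding q_def by (rule power_mult_distrib)
      show ?thesis unfolding e1 e2 by (simp only: ac_simps)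
    qed
    finally show "(\<integral>\<^sup>+z. t k z \<partial>lborel) = ennreal (?w * 2 ^ ?N * q ^ k)" .
  qed
  also have "\<dots> < \<infinity>"
  proof (rule geo_enn_finite)
    show "?w * 2 ^ ?N \<ge> 0" by simp
    show "q \<ge> 0" by (simp add: q_def)
    have "(2::real) ^ ?N = 2 powr (real ?N)" by (simp add: powr_realpow)
    then have "q = 2 powr (- a) * 2 powr (real ?N)" unfolding q_def by simp
    also have "\<dots> = 2 powr (real ?N - a)" by (simp only: powr_add[symmetric]) simp
    finally have "q = 2 powr (real ?N - a)" .
    also have "\<dots> < 2 powr 0" using a by (intro powr_less_mono) auto
    finally show "q < 1" by simp
  qed
  finally show ?thesis .
qed

lemma int_in:
  assumes b: "b \<ge> 0" "b < real DIM('a)"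
  shows "(\<integral>\<^sup>+z. indicator (ball (0::'a::euclidean_space) 1) z * ennreal (norm z powr (- b)) \<partial>lborel) < \<infinity>"
proof -
  let ?w = "unit_ball_vol (real DIM('a))" and ?N = "DIM('a)"
  define q where "q = 2 powr b * (1/2) ^ ?N"
  define t where "t k z = ennreal (2 powr b * (2 powr b) ^ k) * indicator (ball (0::'a) ((1/2) ^ k)) z" for k z
  have pt: "indicator (ball (0::'a) 1) z * ennreal (norm z powr (- b)) \<le> (\<Sum>k. t k z)" for z
  proof (cases "norm z < 1 \<and> z \<noteq> 0")
    case False then show ?thesis by (auto simp: indicator_def)
  next
    case True
    then obtain k :: nat where k: "(1/2) ^ (k + 1) \<le> norm z" "norm z < (1/2) ^ k" using dyad_in[of "norm z"] by auto
    have "norm z powr (- b) \<le> ((1/2) ^ (k + 1)) powr (- b)" using k b by (intro powr_mono2') auto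
    also have "\<dots> = ((1/2) powr (- b)) ^ (k + 1)" by (rule powr_pow_swap) simp
    also have "(1/2::real) powr (- b) = 2 powr b" by (simp add: powr_minus powr_divide)
    finally have "norm z powr (- b) \<le> 2 powr b * (2 powr b) ^ k" by simp
    then have "indicator (ball (0::'a) 1) z * ennreal (norm z powr (- b)) \<le> t k z"
      using k True by (auto simp: t_def indicator_def intro: ennreal_leI)
    also have "t k z \<le> (\<Sum>k. t k z)"
      using sum_le_suminf[OF summableI, of "{k}" "\<lambda>k. t k z"] by simp
    finally show ?thesis .
  qed
  have "(\<integral>\<^sup>+z. indicator (ball (0::'a) 1) z * ennreal (norm z powr (- b)) \<partial>lborel) \<le> (\<integral>\<^sup>+z. (\<Sum>k. t k z) \<partial>lborel)"
    by (intro nn_integral_mono pt)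
  also have "\<dots> = (\<Sum>k. \<integral>\<^sup>+z. t k z \<partial>lborel)"
    by (rule nn_integral_suminf) (simp add: t_def)
  also have "\<dots> = (\<Sum>k. ennreal (?w * 2 powr b * q ^ k))"
  proof (intro suminf_cong)
    fix k
    have "(\<integral>\<^sup>+z. t k z \<partial>lborel) = ennreal (2 powr b * (2 powr b) ^ k) * emeasure lborel (ball (0::'a) ((1/2) ^ k))"
      unfolding t_def by (rule nn_integral_cmult_indicator) simp
    also have "\<dots> = ennreal (2 powr b * (2 powr b) ^ k) * ennreal (?w * ((1/2) ^ k) ^ ?N)"
      by (simp add: ball_emeas)
    also have "\<dots> = ennreal (2 powr b * (2 powr b) ^ k * (?w * ((1/2) ^ k) ^ ?N))"
      by (simp add: ennreal_mult)
    also have "2 powr b * (2 powr b) ^ k * (?w * ((1/2) ^ k) ^ ?N) = ?w * 2 powr b * q ^ k"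
    proof -
      have e1: "((1/2::real) ^ k) ^ ?N = ((1/2) ^ ?N) ^ k"
        by (metis power_mult mult.commute)
      have e2: "q ^ k = (2 powr b) ^ k * ((1/2) ^ ?N) ^ k" unfolding q_def by (rule power_mult_distrib)
      show ?thesis unfolding e1 e2 by (simp only: ac_simps)
    qed
    finally show "(\<integral>\<^sup>+z. t k z \<partial>lborel) = ennreal (?w * 2 powr b * q ^ k)" .
  qed
  also have "\<dots> < \<infinity>"
  proof (rule geo_enn_finite)
    show "?w * 2 powr b \<ge> 0" by simp
    show "q \<ge> 0" by (simp add: q_def)
    have "(2::real) ^ ?N = 2 powr (real ?N)" by (simp add: powr_realpow)
    then have "q = 2 powr b / 2 powr (real ?N)" unfolding q_def by (simp add: power_one_over)
    also have "\<dots> = 2 powr (b - real ?N)" by (simp only: powr_diff)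
    finally have "q = 2 powr (b - real ?N)" .
    also have "\<dots> < 2 powr 0" using b by (intro powr_less_mono) auto
    finally show "q < 1" by simp
  qed
  finally show ?thesis .
qed

lemma one_minus_cos_le: "1 - cos (t::real) \<le> t\<^sup>2 / 2"
proof -
  have "cos t = cos (2 * (t/2))" by simp
  also have "\<dots> = 1 - 2 * (sin (t/2))\<^sup>2" by (rule cos_double_sin)
  finally have c: "1 - cos t = 2 * (sin (t/2))\<^sup>2" by simp
  have "\<bar>sin (t/2)\<bar> \<le> \<bar>t/2\<bar>" by (rule abs_sin_x_le_abs_x)
  then have "(sin (t/2))\<^sup>2 \<le> (t/2)\<^sup>2" by (metis abs_le_square_iff)
  then show ?thesis unfolding c by (simp add: power_divide)
qed

lemma first_coord_Basis: "(first_coord::'a::euclidean_space) \<in> Basis"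
  unfolding first_coord_def by (rule someI_ex) (use nonempty_Basis in blast)

lemma CNs_pos:
  assumes N2: "DIM('a::euclidean_space) \<ge> 2" and s: "0 < s" "s < 1"
  shows "CNs TYPE('a) s > 0"
proof -
  let ?N = "DIM('a)" and ?a = "real DIM('a) + 2 * s"
  define e where "e = (first_coord::'a)"
  have eB: "e \<in> Basis" unfolding e_def by (rule first_coord_Basis)
  have ne: "norm e = 1" using eB by simp
  define I where "I = (\<integral>\<^sup>+ z. ennreal ((1 - cos (z \<bullet> e)) / norm z powr ?a) \<partial>(lborel::'a measure))"
  have CN: "CNs TYPE('a) s = 1 / enn2real I" unfolding CNs_def I_def e_def ..
  have a0: "?a > 0" using s by simp
  have fin: "I < \<infinity>"
  proof -
    have pt: "ennreal ((1 - cos (z \<bullet> e)) / norm z powr ?a) \<le>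
        ennreal (1/2) * (indicator (ball 0 1) z * ennreal (norm z powr (- (?a - 2))))
        + ennreal 2 * (indicator (- ball 0 1) z * ennreal (norm z powr (- ?a)))" for z :: 'a
    proof (cases "z = 0")
      case True then show ?thesis by simp
    next
      case False
      have nz: "norm z > 0" using False by simp
      have pa: "norm z powr ?a > 0" using nz by simp
      have t: "\<bar>z \<bullet> e\<bar> \<le> norm z" using Basis_le_norm[OF eB] .
      show ?thesis
      proof (cases "norm z < 1")
        case True
        have "1 - cos (z \<bullet> e) \<le> (z \<bullet> e)\<^sup>2 / 2" by (rule one_minus_cos_le)
        also have "\<dots> \<le> (norm z)\<^sup>2 / 2" using t by (simp add: abs_le_square_iff[symmetric] power_mono)
        finally have c: "1 - cos (z \<bullet> e) \<le> (norm z)\<^sup>2 / 2" .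
        have "(1 - cos (z \<bullet> e)) / norm z powr ?a \<le> (norm z)\<^sup>2 / 2 / norm z powr ?a"
          using c pa by (intro divide_right_mono) auto
        also have "\<dots> = 1/2 * norm z powr (- (?a - 2))"
        proof -
          have "(norm z)\<^sup>2 = norm z powr 2" using nz by (simp add: powr_realpow)
          moreover have "- (?a - 2) = 2 - ?a" by simp
          ultimately have "(norm z)\<^sup>2 / norm z powr ?a = norm z powr (- (?a - 2))"
            by (simp only: powr_diff)
          then show ?thesis by simp
        qed
        finally have le: "ennreal ((1 - cos (z \<bullet> e)) / norm z powr ?a) \<le> ennreal (1/2 * norm z powr (- (?a - 2)))"
          by (rule ennreal_leI)
        have eq: "ennreal (1/2 * norm z powr (- (?a - 2))) = ennreal (1/2) * ennreal (norm z powr (- (?a - 2)))"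
          by (rule ennreal_mult) auto
        have "ennreal ((1 - cos (z \<bullet> e)) / norm z powr ?a) \<le> ennreal (1/2) * (indicator (ball 0 1) z * ennreal (norm z powr (- (?a - 2))))"
          using le True unfolding eq by (simp add: indicator_def)
        then show ?thesis by (rule order_trans) simp
      next
        case False
        have "(1 - cos (z \<bullet> e)) / norm z powr ?a \<le> 2 / norm z powr ?a"
          using pa cos_ge_minus_one[of "z \<bullet> e"] by (intro divide_right_mono) auto
        also have "\<dots> = 2 * norm z powr (- ?a)" by (simp only: powr_minus divide_inverse)
        finally have le: "ennreal ((1 - cos (z \<bullet> e)) / norm z powr ?a) \<le> ennreal (2 * norm z powr (- ?a))"
          by (rule ennreal_leI)
        have eq: "ennreal (2 * norm z powr (- ?a)) = ennreal 2 * ennreal (norm z powr (- ?a))"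
          by (rule ennreal_mult) auto
        have "ennreal ((1 - cos (z \<bullet> e)) / norm z powr ?a) \<le> ennreal 2 * (indicator (- ball 0 1) z * ennreal (norm z powr (- ?a)))"
          using le False unfolding eq by (simp add: indicator_def)
        then show ?thesis by (rule order_trans) simp
      qed
    qed
    have "I \<le> (\<integral>\<^sup>+ z. ennreal (1/2) * (indicator (ball (0::'a) 1) z * ennreal (norm z powr (- (?a - 2))))
        + ennreal 2 * (indicator (- ball (0::'a) 1) z * ennreal (norm z powr (- ?a))) \<partial>lborel)"
      unfolding I_def by (rule nn_integral_mono) (rule pt)
    also have "\<dots> = ennreal (1/2) * (\<integral>\<^sup>+ z. indicator (ball (0::'a) 1) z * ennreal (norm z powr (- (?a - 2))) \<partial>lborel)
        + ennreal 2 * (\<integral>\<^sup>+ z. indicator (- ball (0::'a) 1) z * ennreal (norm z powr (- ?a)) \<partial>lborel)"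
      by (subst nn_integral_add) (auto simp: nn_integral_cmult)
    also have "\<dots> < \<infinity>"
    proof -
      have "(\<integral>\<^sup>+ z. indicator (ball (0::'a) 1) z * ennreal (norm z powr (- (?a - 2))) \<partial>lborel) < \<infinity>"
        using N2 s by (intro int_in) auto
      moreover have "(\<integral>\<^sup>+ z. indicator (- ball (0::'a) 1) z * ennreal (norm z powr (- ?a)) \<partial>lborel) < \<infinity>"
        using s by (intro int_out) auto
      ultimately have "ennreal (1/2) * (\<integral>\<^sup>+ z. indicator (ball (0::'a) 1) z * ennreal (norm z powr (- (?a - 2))) \<partial>lborel) < \<infinity>"
          "ennreal 2 * (\<integral>\<^sup>+ z. indicator (- ball (0::'a) 1) z * ennreal (norm z powr (- ?a)) \<partial>lborel) < \<infinity>"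
        by (simp_all only: ennreal_mult_less_top ennreal_less_top infinity_ennreal_def) auto
      then show ?thesis by (simp only: ennreal_add_less_top infinity_ennreal_def)
    qed
    finally show ?thesis .
  qed
  have pos: "I > 0"
  proof -
    define c where "c = 1 / (pi + 1) powr ?a"
    have c0: "c > 0" using pi_gt3 by (simp add: c_def)
    have pt: "ennreal c * indicator (ball (pi *\<^sub>R e) 1) z \<le> ennreal ((1 - cos (z \<bullet> e)) / norm z powr ?a)" for z
    proof (cases "z \<in> ball (pi *\<^sub>R e) 1")
      case False then show ?thesis by simp
    next
      case True
      then have d: "norm (z - pi *\<^sub>R e) < 1" by (simp add: dist_norm norm_minus_commute)
      have "\<bar>(z - pi *\<^sub>R e) \<bullet> e\<bar> \<le> norm (z - pi *\<^sub>R e)" by (rule Basis_le_norm[OF eB])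
      moreover have "(z - pi *\<^sub>R e) \<bullet> e = z \<bullet> e - pi" using ne by (simp add: inner_diff_left norm_eq_1[symmetric])
      ultimately have t: "\<bar>z \<bullet> e - pi\<bar> < 1" using d by linarith
      have "cos (z \<bullet> e - pi) > 0" using t pi_gt3 by (intro cos_gt_zero_pi) auto
      then have cz: "1 - cos (z \<bullet> e) \<ge> 1" by simp
      have "norm z \<le> norm (pi *\<^sub>R e) + norm (z - pi *\<^sub>R e)" by (rule norm_triangle_sub)
      then have nz1: "norm z \<le> pi + 1" using d ne by simp
      have "norm z \<ge> norm (pi *\<^sub>R e) - norm (z - pi *\<^sub>R e)" using norm_triangle_ineq2[of "pi *\<^sub>R e" z]
        by (simp add: norm_minus_commute)
      moreover have "norm (pi *\<^sub>R e) = pi" using ne by simp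
      ultimately have nz0: "norm z > 0" using d pi_gt3 by linarith
      have le: "norm z powr ?a \<le> (pi + 1) powr ?a" using nz1 nz0 a0 by (intro powr_mono2) auto
      have p1: "norm z powr ?a > 0" using nz0 by simp
      have p2: "(pi + 1) powr ?a > 0" using pi_gt3 by simp
      have "c \<le> 1 / norm z powr ?a" unfolding c_def
        by (rule divide_left_mono[OF le]) (simp, rule mult_pos_pos[OF p2 p1])
      also have "\<dots> \<le> (1 - cos (z \<bullet> e)) / norm z powr ?a"
        by (rule divide_right_mono[OF cz]) (rule less_imp_le[OF p1])
      finally have "ennreal c \<le> ennreal ((1 - cos (z \<bullet> e)) / norm z powr ?a)" by (rule ennreal_leI)
      then show ?thesis using True by simp
    qed
    have em: "emeasure lborel (ball (pi *\<^sub>R e) (1::real)) = ennreal (unit_ball_vol (real DIM('a)) * 1 ^ DIM('a))"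
      by (rule ball_emeas) simp
    have "0 < c * (unit_ball_vol (real DIM('a)) * 1 ^ DIM('a))" using c0 by simp
    then have "0 < ennreal c * emeasure lborel (ball (pi *\<^sub>R e) (1::real))"
      unfolding em using c0 by (simp add: ennreal_mult[symmetric])
    also have "\<dots> = (\<integral>\<^sup>+ z. ennreal c * indicator (ball (pi *\<^sub>R e) 1) z \<partial>lborel)"
      by (rule nn_integral_cmult_indicator[symmetric]) simp
    also have "\<dots> \<le> I" unfolding I_def by (intro nn_integral_mono pt)
    finally show ?thesis .
  qed
  have "enn2real I > 0" using fin pos by (simp add: enn2real_positive_iff)
  then show ?thesis unfolding CN by simp
qed

lemma gag_Gn:
  assumes vm[measurable]: "u \<in> borel_measurable borel"
  shows "gagliardo_sq s u = ennreal (CNs TYPE('a) s / 2) * Gn s (u::'a::euclidean_space \<Rightarrow> real)"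
proof -
  have "(\<integral>\<^sup>+ p. ennreal ((u (fst p) - u (snd p))\<^sup>2 / norm (fst p - snd p) powr (real DIM('a) + 2 * s))
        \<partial>(lborel \<Otimes>\<^sub>M lborel)) = (\<integral>\<^sup>+ p. ennreal (kern s u (fst p) (snd p)) \<partial>(lborel \<Otimes>\<^sub>M lborel))"
    by (simp add: kern_def)
  also have "\<dots> = Gn s u" unfolding Gn_def
    by (rule lborel.nn_integral_fst[symmetric, where f="\<lambda>p. ennreal (kern s u (fst p) (snd p))", simplified]) measurable
  finally show ?thesis unfolding gagliardo_sq_def by simp
qed

lemma AE_ex_lborel:
  assumes "AE x in (lborel::'a::euclidean_space measure). P x"
  shows "\<exists>x. P x"
proof (rule ccontr)
  assume "\<not> (\<exists>x. P x)"
  from assms obtain N where N: "{x \<in> space lborel. \<not> P x} \<subseteq> N" "emeasure lborel N = 0" "N \<in> sets lborel"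
    by (rule AE_E)
  have "UNIV \<subseteq> N" using N(1) \<open>\<not> (\<exists>x. P x)\<close> by auto
  then have "emeasure lborel (UNIV::'a set) \<le> emeasure lborel N" by (intro emeasure_mono) (use N in auto)
  then show False using N(2) by simp
qed

lemma zero_G:
  fixes u :: "'a::euclidean_space \<Rightarrow> real"
  assumes vm[measurable]: "u \<in> borel_measurable borel" and G: "Gn s u = 0"
    and L: "(\<integral>\<^sup>+ x. ennreal (\<bar>u x\<bar> powr p) \<partial>lborel) < \<infinity>" and p: "p > 0"
  shows "AE x in lborel. u x = 0"
proof -
  have m: "(\<lambda>y. \<integral>\<^sup>+z. ennreal (kern s u y z) \<partial>lborel) \<in> borel_measurable lborel" by measurable
  have "AE y in lborel. (\<integral>\<^sup>+z. ennreal (kern s u y z) \<partial>lborel) = 0"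
    using G nn_integral_0_iff_AE[OF m] unfolding Gn_def by simp
  then have "AE y in lborel. AE z in lborel. kern s u y z = 0"
  proof eventually_elim
    case (elim y)
    then have "(\<integral>\<^sup>+z. ennreal (kern s u y z) \<partial>lborel) = 0" .
    moreover have m': "(\<lambda>z. ennreal (kern s u y z)) \<in> borel_measurable lborel" by measurable
    ultimately have "AE z in lborel. ennreal (kern s u y z) = 0" using nn_integral_0_iff_AE[OF m'] by simp
    then show "AE z in lborel. kern s u y z = 0"
      by eventually_elim (metis antisym kern_nonneg ennreal_eq_0_iff)
  qed
  then have "AE y in lborel. AE z in lborel. u z = u y"
  proof eventually_elim
    case (elim y)
    then show "AE z in lborel. u z = u y"
    proof eventually_elim
      case (elim z)
      then have k: "kern s u y z = 0" .
      show "u z = u y"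
      proof (cases "y = z")
        case False
        then have "norm (y - z) powr (real DIM('a) + 2 * s) > 0" by simp
        then show ?thesis using k by (simp add: kern_def)
      qed simp
    qed
  qed
  then obtain y0 where y0: "AE z in lborel. u z = u y0" using AE_ex_lborel by blast
  have "(\<integral>\<^sup>+ x. ennreal (\<bar>u x\<bar> powr p) \<partial>lborel) = (\<integral>\<^sup>+ x. ennreal (\<bar>u y0\<bar> powr p) \<partial>(lborel::'a measure))"
  proof (rule nn_integral_cong_AE)
    show "AE x in lborel. ennreal (\<bar>u x\<bar> powr p) = ennreal (\<bar>u y0\<bar> powr p)"
      using y0 by eventually_elim simp
  qed
  also have "\<dots> = ennreal (\<bar>u y0\<bar> powr p) * emeasure lborel (UNIV::'a set)"
    using nn_integral_cmult_indicator[of UNIV lborel "ennreal (\<bar>u y0\<bar> powr p)"] by simp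
  finally have "ennreal (\<bar>u y0\<bar> powr p) * \<infinity> < \<infinity>" using L by simp
  then have "\<bar>u y0\<bar> powr p = 0" by (cases "\<bar>u y0\<bar> powr p > 0") (auto simp: ennreal_mult_less_top)
  then have "u y0 = 0" by simp
  then show ?thesis using y0 by simp
qed

lemma li_from_Lp:
  fixes u :: "'a::euclidean_space \<Rightarrow> real"
  assumes vm[measurable]: "u \<in> borel_measurable borel" and p: "p \<ge> 1"
    and L: "(\<integral>\<^sup>+ x. ennreal (\<bar>u x\<bar> powr p) \<partial>lborel) < \<infinity>"
  shows "integrable lborel (\<lambda>y. indicator (ball c r) y * u y)"
proof (rule integrableI_bounded)
  show "(\<lambda>y. indicator (ball c r) y * u y) \<in> borel_measurable lborel" by measurable
  have pt: "ennreal (norm (indicator (ball c r) y * u y)) \<le> indicator (ball c r) y + ennreal (\<bar>u y\<bar> powr p)" for y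
  proof (cases "y \<in> ball c r")
    case True
    have "\<bar>u y\<bar> \<le> 1 + \<bar>u y\<bar> powr p"
    proof (cases "\<bar>u y\<bar> \<le> 1")
      case True
      have "0 \<le> \<bar>u y\<bar> powr p" by simp
      then show ?thesis using True by linarith
    next
      case False
      then have "\<bar>u y\<bar> powr 1 \<le> \<bar>u y\<bar> powr p" using p by (intro powr_mono) auto
      then show ?thesis using False by simp
    qed
    then have "ennreal \<bar>u y\<bar> \<le> ennreal (1 + \<bar>u y\<bar> powr p)" by (rule ennreal_leI)
    then show ?thesis using True by (simp add: ennreal_plus)
  qed (simp)
  have "(\<integral>\<^sup>+ y. ennreal (norm (indicator (ball c r) y * u y)) \<partial>lborel) \<le> (\<integral>\<^sup>+ y. indicator (ball c r) y + ennreal (\<bar>u y\<bar> powr p) \<partial>lborel)"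
    by (intro nn_integral_mono pt)
  also have "\<dots> = emeasure lborel (ball c r) + (\<integral>\<^sup>+ y. ennreal (\<bar>u y\<bar> powr p) \<partial>lborel)"
    by (subst nn_integral_add) auto
  also have "\<dots> < \<infinity>" using L emeasure_lborel_ball_finite[of c r] by simp
  finally show "(\<integral>\<^sup>+ y. ennreal (norm (indicator (ball c r) y * u y)) \<partial>lborel) < \<infinity>" .
qed

lemma Kmeas:
  fixes K :: "real \<Rightarrow> real"
  assumes K: "continuous_on {0<..} K"
  shows "(\<lambda>x::'a::euclidean_space. K (norm x)) \<in> borel_measurable borel"
proof -
  have m1: "(\<lambda>t. indicator {0<..} t *\<^sub>R K t) \<in> borel_measurable borel"
    by (rule borel_measurable_continuous_on_indicator[OF _ K]) simp
  have m2: "(\<lambda>x::'a. indicator {0<..} (norm x) *\<^sub>R K (norm x)) \<in> borel_measurable borel"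
    using measurable_compose[OF borel_measurable_norm m1] by (simp add: o_def)
  have m3: "(\<lambda>x::'a. indicator {0<..} (norm x) *\<^sub>R K (norm x) + (if norm x = 0 then K 0 else 0)) \<in> borel_measurable borel"
    using m2 by measurable
  have eq: "(\<lambda>x::'a. indicator {0<..} (norm x) *\<^sub>R K (norm x) + (if norm x = 0 then K 0 else 0)) = (\<lambda>x. K (norm x))"
  proof
    fix x :: 'a
    show "indicator {0<..} (norm x) *\<^sub>R K (norm x) + (if norm x = 0 then K 0 else 0) = K (norm x)"
      by (cases "norm x = 0") (auto simp: indicator_def)
  qed
  show ?thesis using m3 unfolding eq .
qed

lemma gag_scale:
  assumes vm[measurable]: "u \<in> borel_measurable borel"
  shows "gagliardo_sq s (\<lambda>x. c * u x) = ennreal (c\<^sup>2) * gagliardo_sq s (u::'a::euclidean_space \<Rightarrow> real)"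
proof -
  let ?a = "real DIM('a) + 2 * s"
  have "(\<integral>\<^sup>+ p. ennreal ((c * u (fst p) - c * u (snd p))\<^sup>2 / norm (fst p - snd p) powr ?a) \<partial>(lborel \<Otimes>\<^sub>M lborel))
      = (\<integral>\<^sup>+ p. ennreal (c\<^sup>2) * ennreal ((u (fst p) - u (snd p))\<^sup>2 / norm (fst p - snd p) powr ?a) \<partial>(lborel \<Otimes>\<^sub>M lborel))"
  proof (intro nn_integral_cong)
    fix p :: "'a \<times> 'a"
    have eq: "(c * u (fst p) - c * u (snd p))\<^sup>2 / norm (fst p - snd p) powr ?a = c\<^sup>2 * ((u (fst p) - u (snd p))\<^sup>2 / norm (fst p - snd p) powr ?a)"
      by (simp add: power_mult_distrib right_diff_distrib[symmetric])
    show "ennreal ((c * u (fst p) - c * u (snd p))\<^sup>2 / norm (fst p - snd p) powr ?a) = ennreal (c\<^sup>2) * ennreal ((u (fst p) - u (snd p))\<^sup>2 / norm (fst p - snd p) powr ?a)"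
      unfolding eq by (rule ennreal_mult') simp
  qed
  also have "\<dots> = ennreal (c\<^sup>2) * (\<integral>\<^sup>+ p. ennreal ((u (fst p) - u (snd p))\<^sup>2 / norm (fst p - snd p) powr ?a) \<partial>(lborel \<Otimes>\<^sub>M lborel))"
    by (rule nn_integral_cmult) measurable
  finally show ?thesis unfolding gagliardo_sq_def by (simp add: ac_simps)
qed

lemma pot_scale:
  fixes V :: "real \<Rightarrow> real"
  assumes vm[measurable]: "u \<in> borel_measurable borel" and V: "continuous_on {0<..} V"
  shows "potential_int V (\<lambda>x. c * u x) = ennreal (c\<^sup>2) * potential_int V (u::'a::euclidean_space \<Rightarrow> real)"
proof -
  have Vm[measurable]: "(\<lambda>x::'a. V (norm x)) \<in> borel_measurable borel" by (rule Kmeas[OF V])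
  have "(\<integral>\<^sup>+ x. ennreal (V (norm x) * (c * u x)\<^sup>2) \<partial>lborel) = (\<integral>\<^sup>+ x. ennreal (c\<^sup>2) * ennreal (V (norm x) * (u x)\<^sup>2) \<partial>lborel)"
  proof (intro nn_integral_cong)
    fix x :: 'a
    have eq: "V (norm x) * (c * u x)\<^sup>2 = c\<^sup>2 * (V (norm x) * (u x)\<^sup>2)" by (simp add: power_mult_distrib)
    show "ennreal (V (norm x) * (c * u x)\<^sup>2) = ennreal (c\<^sup>2) * ennreal (V (norm x) * (u x)\<^sup>2)"
      unfolding eq by (rule ennreal_mult') simp
  qed
  also have "\<dots> = ennreal (c\<^sup>2) * (\<integral>\<^sup>+ x. ennreal (V (norm x) * (u x)\<^sup>2) \<partial>lborel)"
    by (rule nn_integral_cmult) measurable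
  finally show ?thesis unfolding potential_int_def .
qed

lemma Lp_scale:
  assumes vm[measurable]: "u \<in> borel_measurable borel"
  shows "(\<integral>\<^sup>+ x. ennreal (\<bar>c * u x\<bar> powr p) \<partial>lborel) = ennreal (\<bar>c\<bar> powr p) * (\<integral>\<^sup>+ x. ennreal (\<bar>u x\<bar> powr p) \<partial>(lborel::'a::euclidean_space measure))"
proof -
  have "(\<integral>\<^sup>+ x. ennreal (\<bar>c * u x\<bar> powr p) \<partial>lborel) = (\<integral>\<^sup>+ x. ennreal (\<bar>c\<bar> powr p) * ennreal (\<bar>u x\<bar> powr p) \<partial>(lborel::'a measure))"
    by (intro nn_integral_cong) (simp add: abs_mult powr_mult ennreal_mult)
  also have "\<dots> = ennreal (\<bar>c\<bar> powr p) * (\<integral>\<^sup>+ x. ennreal (\<bar>u x\<bar> powr p) \<partial>(lborel::'a measure))"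
    by (rule nn_integral_cmult) measurable
  finally show ?thesis .
qed

lemma wint_scale:
  fixes K :: "real \<Rightarrow> real"
  assumes vm[measurable]: "u \<in> borel_measurable borel" and K: "continuous_on {0<..} K"
    and A[measurable]: "A \<in> sets borel"
  shows "wint K q A (\<lambda>x. c * u x) = ennreal (\<bar>c\<bar> powr q) * wint K q A (u::'a::euclidean_space \<Rightarrow> real)"
proof -
  have Km[measurable]: "(\<lambda>x::'a. K (norm x)) \<in> borel_measurable borel" by (rule Kmeas[OF K])
  have "(\<integral>\<^sup>+x. ennreal (K (norm x) * \<bar>c * u x\<bar> powr q) * indicator A x \<partial>lborel)
      = (\<integral>\<^sup>+x. ennreal (\<bar>c\<bar> powr q) * (ennreal (K (norm x) * \<bar>u x\<bar> powr q) * indicator A x) \<partial>lborel)"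
  proof (intro nn_integral_cong)
    fix x :: 'a
    have eq: "K (norm x) * \<bar>c * u x\<bar> powr q = \<bar>c\<bar> powr q * (K (norm x) * \<bar>u x\<bar> powr q)"
      by (simp add: abs_mult powr_mult)
    have eq2: "ennreal (\<bar>c\<bar> powr q * (K (norm x) * \<bar>u x\<bar> powr q)) = ennreal (\<bar>c\<bar> powr q) * ennreal (K (norm x) * \<bar>u x\<bar> powr q)"
      by (rule ennreal_mult') simp
    show "ennreal (K (norm x) * \<bar>c * u x\<bar> powr q) * indicator A x = ennreal (\<bar>c\<bar> powr q) * (ennreal (K (norm x) * \<bar>u x\<bar> powr q) * indicator A x)"
      unfolding eq eq2 by (simp only: mult.assoc)
  qed
  also have "\<dots> = ennreal (\<bar>c\<bar> powr q) * (\<integral>\<^sup>+x. ennreal (K (norm x) * \<bar>u x\<bar> powr q) * indicator A x \<partial>lborel)"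
    by (rule nn_integral_cmult) measurable
  finally show ?thesis unfolding wint_def .
qed

lemma wint_restrict:
  assumes q: "q > 0"
  shows "wint K q UNIV (\<lambda>x. u x * indicator B x) = wint K q B (u::'a::euclidean_space \<Rightarrow> real)"
  unfolding wint_def
  by (intro nn_integral_cong) (use q in \<open>auto simp: indicator_def\<close>)

lemma wint_split:
  fixes K :: "real \<Rightarrow> real"
  assumes vm[measurable]: "u \<in> borel_measurable borel" and K: "continuous_on {0<..} K"
    and A[measurable]: "A \<in> sets borel" and B[measurable]: "B \<in> sets borel" and C: "C \<subseteq> A \<union> B"
  shows "wint K q C u \<le> wint K q A u + wint K q B (u::'a::euclidean_space \<Rightarrow> real)"
proof -
  have Km[measurable]: "(\<lambda>x::'a. K (norm x)) \<in> borel_measurable borel" by (rule Kmeas[OF K])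
  have "wint K q C u \<le> (\<integral>\<^sup>+x. ennreal (K (norm x) * \<bar>u x\<bar> powr q) * indicator A x + ennreal (K (norm x) * \<bar>u x\<bar> powr q) * indicator B x \<partial>lborel)"
    unfolding wint_def using C by (intro nn_integral_mono) (auto simp: indicator_def)
  also have "\<dots> = wint K q A u + wint K q B u" unfolding wint_def
    by (rule nn_integral_add) measurable
  finally show ?thesis .
qed

lemma wint_mono_set:
  assumes "A \<subseteq> B"
  shows "wint K q A u \<le> wint K q B u"
  unfolding wint_def using assms by (intro nn_integral_mono) (auto simp: indicator_def)

lemma norm1_bound:
  fixes V K :: "real \<Rightarrow> real" and s q1 q2 R1 R2 :: real
  assumes N2: "DIM('a::euclidean_space) \<ge> 2"
    and s1: "1/2 < s" and s2: "s < 1"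
    and q1: "q1 > 1" and q2: "q2 > 1"
    and Vc: "continuous_on {0<..} V" and Vp: "\<forall>r>0. V r \<ge> 0"
    and Kc: "continuous_on {0<..} K" and Kp: "\<forall>r>0. K r > 0"
    and R1: "R1 > 0" and R2: "R2 > 0"
    and S0f: "S0 s V K TYPE('a) q1 R1 < \<infinity>"
    and Sif: "Sinf s V K TYPE('a) q2 R2 < \<infinity>"
  shows "\<exists>C1 C2. C1 \<ge> 0 \<and> C2 \<ge> 0 \<and> (\<forall>v \<in> (HsV_rad s V :: ('a \<Rightarrow> real) set). HsV_norm s V v = 1 \<longrightarrow>
      wint K q1 (ball 0 (max R1 R2)) v \<le> ennreal C1 \<and> wint K q2 (- ball 0 (max R1 R2)) v \<le> ennreal C2)"
proof -
  let ?w = "unit_ball_vol (real DIM('a))" and ?N = "DIM('a)"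
  have w0: "?w > 0" by simp
  define Mr where "Mr = max R1 R2"
  have Mr: "Mr \<ge> R1" "Mr \<ge> R2" "Mr > 0" using R1 by (auto simp: Mr_def)
  define cN where "cN = CNs TYPE('a) s / 2"
  have cN0: "cN > 0" unfolding cN_def using CNs_pos[OF N2] s1 s2 by simp
  define \<Gamma> where "\<Gamma> = 1 / cN"
  have \<Gamma>0: "\<Gamma> \<ge> 0" using cN0 by (simp add: \<Gamma>_def)
  define S0r where "S0r = enn2real (S0 s V K TYPE('a) q1 R1)"
  define Sir where "Sir = enn2real (Sinf s V K TYPE('a) q2 R2)"
  have S0e: "S0 s V K TYPE('a) q1 R1 = ennreal S0r" using S0f unfolding S0r_def by simp
  have Sie: "Sinf s V K TYPE('a) q2 R2 = ennreal Sir" using Sif unfolding Sir_def by simp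
  have S0r0: "S0r \<ge> 0" "Sir \<ge> 0" by (simp_all add: S0r_def Sir_def)
  define \<delta> where "\<delta> = R1 / 4"
  define pc where "pc = (R1 / 2) *\<^sub>R (first_coord::'a)"
  have npc: "norm pc = R1 / 2" using first_coord_Basis[where 'a='a] R1 by (simp add: pc_def)
  have de: "\<delta> > 0" using R1 by (simp add: \<delta>_def)
  have np: "norm pc + \<delta> \<le> Mr" using npc Mr R1 by (simp add: \<delta>_def)
  have Dn: "R1 / 4 \<le> norm y \<and> norm y \<le> 3 * R1 / 4" if "y \<in> ball pc \<delta>" for y
  proof -
    have d: "norm (y - pc) < \<delta>" using that by (simp add: dist_norm norm_minus_commute)
    have "norm y \<le> norm pc + norm (y - pc)" using norm_triangle_ineq[of pc "y - pc"] by simp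
    moreover have "norm pc \<le> norm y + norm (y - pc)" using norm_triangle_ineq[of y "pc - y"]
      by (simp add: norm_minus_commute)
    ultimately show ?thesis using d npc by (simp add: \<delta>_def)
  qed
  have DR1: "ball pc \<delta> \<subseteq> ball 0 R1"
  proof
    fix y assume "y \<in> ball pc \<delta>"
    then have "norm y \<le> 3 * R1 / 4" using Dn by blast
    then show "y \<in> ball 0 R1" using R1 by simp
  qed
  have sub1: "{R1/4..3*R1/4} \<subseteq> {0<..}" using R1 by auto
  have "\<exists>x\<in>{R1/4..3*R1/4}. \<forall>y\<in>{R1/4..3*R1/4}. K x \<le> K y"
    by (rule continuous_attains_inf) (use R1 continuous_on_subset[OF Kc sub1] in auto)
  then obtain tmin where tmin: "tmin \<in> {R1/4..3*R1/4}" "\<And>t. t \<in> {R1/4..3*R1/4} \<Longrightarrow> K tmin \<le> K t"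
    by blast
  define Kmin where "Kmin = K tmin"
  have Kmin0: "Kmin > 0" using tmin(1) Kp R1 by (simp add: Kmin_def)
  have sub2: "{R1..Mr} \<subseteq> {0<..}" using R1 by auto
  have "\<exists>x\<in>{R1..Mr}. \<forall>y\<in>{R1..Mr}. K y \<le> K x"
    by (rule continuous_attains_sup) (use R1 Mr continuous_on_subset[OF Kc sub2] in auto)
  then obtain tmax where tmax: "tmax \<in> {R1..Mr}" "\<And>t. t \<in> {R1..Mr} \<Longrightarrow> K t \<le> K tmax"
    by blast
  define Kmax where "Kmax = K tmax"
  have Kmax0: "Kmax > 0" using tmax(1) Kp R1 by (simp add: Kmax_def)
  define mD where "mD = ?w * \<delta> ^ ?N"
  have mD0: "mD > 0" using de by (simp add: mD_def)
  define Ad where "Ad = 1 + 1 / mD * (1 / Kmin) * S0r"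
  define Mb where "Mb = Ad + topc ?N s \<Gamma> Mr \<delta> + telc ?N s \<Gamma> R1 1"
  define LA where "LA = ?w * Mr ^ ?N"
  have LA0: "LA > 0" using Mr by (simp add: LA_def)
  define C1 where "C1 = S0r + Kmax * Mb powr q1 * LA"
  have C10: "C1 \<ge> 0" using S0r0 Kmax0 LA0 by (simp add: C1_def)
  have bounds: "wint K q1 (ball 0 Mr) v \<le> ennreal C1 \<and> wint K q2 (- ball 0 Mr) v \<le> ennreal Sir"
    if vH: "v \<in> HsV_rad s V" and v1: "HsV_norm s V v = 1" for v :: "'a \<Rightarrow> real"
  proof -
    have vm[measurable]: "v \<in> borel_measurable borel" using vH by (simp add: HsV_rad_def HsV_def Hdot_def)
    have rad: "radial v" using vH by (simp add: HsV_rad_def)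
    have Lp: "(\<integral>\<^sup>+ x. ennreal (\<bar>v x\<bar> powr crit_exp ?N s) \<partial>lborel) < \<infinity>"
      using vH by (simp add: HsV_rad_def HsV_def Hdot_def)
    have gfin: "gagliardo_sq s v < \<infinity>" using vH by (simp add: HsV_rad_def HsV_def Hdot_def)
    have pe: "crit_exp ?N s \<ge> 1"
    proof -
      have "real ?N - 2 * s > 0" using N2 s2 by linarith
      moreover have "2 * real ?N \<ge> real ?N - 2 * s" using s1 by simp
      ultimately show ?thesis unfolding crit_exp_def by simp
    qed
    have li: "\<And>c r. integrable lborel (\<lambda>y. indicator (ball c r) y * v y)"
      by (rule li_from_Lp[OF vm pe Lp])
    have vset: "v \<in> {u \<in> (HsV_rad s V :: ('a \<Rightarrow> real) set). HsV_norm s V u = 1}" using vH v1 by simp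
    have W1: "wint K q1 (ball 0 R1) v \<le> ennreal S0r"
      unfolding S0e[symmetric] S0_def by (rule SUP_upper[OF vset])
    have W2: "wint K q2 (- ball 0 R2) v \<le> ennreal Sir"
      unfolding Sie[symmetric] Sinf_def by (rule SUP_upper[OF vset])
    have G: "Gn s v \<le> ennreal \<Gamma>"
    proof -
      have "enn2real (gagliardo_sq s v) + enn2real (potential_int V v) = 1"
        using v1 unfolding HsV_norm_def by simp
      moreover have "enn2real (potential_int V v) \<ge> 0" by simp
      ultimately have "enn2real (gagliardo_sq s v) \<le> 1" by linarith
      moreover have "gagliardo_sq s v = ennreal (enn2real (gagliardo_sq s v))" using gfin by simp
      ultimately have g1: "gagliardo_sq s v \<le> ennreal 1" by (metis ennreal_leI)
      have "ennreal cN * Gn s v \<le> ennreal 1" using g1 unfolding gag_Gn[OF vm] cN_def .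
      then have "ennreal (1 / cN) * (ennreal cN * Gn s v) \<le> ennreal (1 / cN) * ennreal 1"
        by (rule mult_left_mono) simp
      moreover have "ennreal (1 / cN) * ennreal cN = 1" using cN0 by (simp add: ennreal_mult[symmetric])
      ultimately have "(ennreal (1 / cN) * ennreal cN) * Gn s v \<le> ennreal (1 / cN) * ennreal 1"
        by (metis mult.assoc)
      then show ?thesis unfolding \<Gamma>_def using \<open>ennreal (1 / cN) * ennreal cN = 1\<close> by simp
    qed
    have Ad: "\<bar>avg (ball pc \<delta>) v\<bar> \<le> Ad"
    proof -
      have mDe: "emeasure lborel (ball pc \<delta>) = ennreal mD" using de by (simp add: ball_emeas mD_def)
      have mDm: "measure lborel (ball pc \<delta>) = mD" using mDe mD0 by (simp add: measure_def)
      have bd: "ennreal \<bar>v y\<bar> \<le> ennreal 1 + ennreal 1 * ennreal (\<bar>v y\<bar> powr q1)" for y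
      proof -
        have "\<bar>v y\<bar> \<le> 1 + \<bar>v y\<bar> powr q1"
        proof (cases "\<bar>v y\<bar> \<le> 1")
          case True
          have "0 \<le> \<bar>v y\<bar> powr q1" by simp
          then show ?thesis using True by linarith
        next
          case False
          then have "\<bar>v y\<bar> powr 1 \<le> \<bar>v y\<bar> powr q1" using q1 by (intro powr_mono) auto
          then show ?thesis using False by simp
        qed
        then have "ennreal \<bar>v y\<bar> \<le> ennreal (1 + \<bar>v y\<bar> powr q1)" by (rule ennreal_leI)
        then show ?thesis by (simp add: ennreal_plus)
      qed
      have A1: "ennreal \<bar>(\<integral>y. indicator (ball pc \<delta>) y * v y \<partial>lborel) / mD\<bar> \<le> ennreal 1 + ennreal (1 / mD) *
          (\<integral>\<^sup>+y. indicator (ball pc \<delta>) y * ennreal (\<bar>v y\<bar> powr q1) \<partial>lborel)"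
        by (rule avg_core[OF _ mDe mD0 li]) (use bd in auto)
      have "(\<integral>\<^sup>+y. indicator (ball pc \<delta>) y * ennreal (\<bar>v y\<bar> powr q1) \<partial>lborel)
          \<le> (\<integral>\<^sup>+y. ennreal (1 / Kmin) * (ennreal (K (norm y) * \<bar>v y\<bar> powr q1) * indicator (ball 0 R1) y) \<partial>lborel)"
      proof (intro nn_integral_mono)
        fix y :: 'a
        show "indicator (ball pc \<delta>) y * ennreal (\<bar>v y\<bar> powr q1) \<le> ennreal (1 / Kmin) * (ennreal (K (norm y) * \<bar>v y\<bar> powr q1) * indicator (ball 0 R1) y)"
        proof (cases "y \<in> ball pc \<delta>")
          case False then show ?thesis by simp
        next
          case True
          have yn: "norm y \<in> {R1/4..3*R1/4}" using Dn[OF True] by simp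
          have Ky: "K (norm y) \<ge> Kmin" using tmin(2)[OF yn] by (simp add: Kmin_def)
          have "\<bar>v y\<bar> powr q1 = 1 / Kmin * (Kmin * \<bar>v y\<bar> powr q1)" using Kmin0 by simp
          also have "\<dots> \<le> 1 / Kmin * (K (norm y) * \<bar>v y\<bar> powr q1)"
            using Ky Kmin0 by (intro mult_left_mono mult_right_mono) auto
          finally have le: "\<bar>v y\<bar> powr q1 \<le> 1 / Kmin * (K (norm y) * \<bar>v y\<bar> powr q1)" .
          have "ennreal (\<bar>v y\<bar> powr q1) \<le> ennreal (1 / Kmin * (K (norm y) * \<bar>v y\<bar> powr q1))"
            by (rule ennreal_leI[OF le])
          also have "\<dots> = ennreal (1 / Kmin) * ennreal (K (norm y) * \<bar>v y\<bar> powr q1)"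
            by (rule ennreal_mult') (use Kmin0 in simp)
          finally show ?thesis using True DR1 by auto
        qed
      qed
      also have "\<dots> = ennreal (1 / Kmin) * wint K q1 (ball 0 R1) v" unfolding wint_def
        by (rule nn_integral_cmult) (use Kmeas[OF Kc] in measurable)
      also have "\<dots> \<le> ennreal (1 / Kmin) * ennreal S0r" by (intro mult_left_mono W1) simp
      finally have A3: "(\<integral>\<^sup>+y. indicator (ball pc \<delta>) y * ennreal (\<bar>v y\<bar> powr q1) \<partial>lborel) \<le> ennreal (1 / Kmin) * ennreal S0r" .
      have A4: "ennreal \<bar>(\<integral>y. indicator (ball pc \<delta>) y * v y \<partial>lborel) / mD\<bar> \<le> ennreal 1 + ennreal (1 / mD) * (ennreal (1 / Kmin) * ennreal S0r)"
        by (rule order_trans[OF A1 add_left_mono[OF mult_left_mono[OF A3 zero_le]]])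
      have A5: "ennreal 1 + ennreal (1 / mD) * (ennreal (1 / Kmin) * ennreal S0r) = ennreal Ad"
      proof -
        have "ennreal (1 / Kmin) * ennreal S0r = ennreal (1 / Kmin * S0r)"
          using Kmin0 S0r0 by (intro ennreal_mult[symmetric]) auto
        moreover have "ennreal (1 / mD) * ennreal (1 / Kmin * S0r) = ennreal (1 / mD * (1 / Kmin * S0r))"
          using Kmin0 S0r0 mD0 by (intro ennreal_mult[symmetric]) auto
        moreover have "ennreal 1 + ennreal (1 / mD * (1 / Kmin * S0r)) = ennreal (1 + 1 / mD * (1 / Kmin * S0r))"
          using Kmin0 S0r0 mD0 by (intro ennreal_plus[symmetric]) auto
        ultimately show ?thesis unfolding Ad_def by (simp only: mult.assoc)
      qed
      have "ennreal \<bar>(\<integral>y. indicator (ball pc \<delta>) y * v y \<partial>lborel) / mD\<bar> \<le> ennreal Ad" using A4 unfolding A5 .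
      then have "ennreal \<bar>avg (ball pc \<delta>) v\<bar> \<le> ennreal Ad" unfolding avg_def mDm .
      moreover have "Ad \<ge> 0" unfolding Ad_def using mD0 Kmin0 S0r0 by simp
      ultimately show ?thesis using ennreal_le_iff by blast
    qed
    have AEb: "AE x in lborel. x \<in> ball 0 Mr - ball 0 R1 \<longrightarrow> \<bar>v x\<bar> \<le> Mb"
      unfolding Mb_def by (rule annulus_ae[OF vm rad li s1 G \<Gamma>0 R1 de np Ad])
    have Wann: "wint K q1 (ball 0 Mr - ball 0 R1) v \<le> ennreal (Kmax * Mb powr q1 * LA)"
    proof -
      have "wint K q1 (ball 0 Mr - ball 0 R1) v \<le> (\<integral>\<^sup>+x. ennreal (Kmax * Mb powr q1) * indicator (ball (0::'a) Mr - ball 0 R1) x \<partial>lborel)"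
        unfolding wint_def
      proof (rule nn_integral_mono_AE)
        show "AE x in lborel. ennreal (K (norm x) * \<bar>v x\<bar> powr q1) * indicator (ball 0 Mr - ball 0 R1) x
            \<le> ennreal (Kmax * Mb powr q1) * indicator (ball 0 Mr - ball 0 R1) x"
          using AEb
        proof eventually_elim
          case (elim x)
          show ?case
          proof (cases "x \<in> ball 0 Mr - ball 0 R1")
            case False then show ?thesis by simp
          next
            case True
            have xn: "norm x \<in> {R1..Mr}" using True by auto
            have Kx1: "K (norm x) \<le> Kmax" using tmax(2)[OF xn] by (simp add: Kmax_def)
            have "norm x > 0" using xn R1 by auto
            then have Kx2: "K (norm x) > 0" using Kp by blast
            note Kx = Kx1 Kx2
            have vx: "\<bar>v x\<bar> \<le> Mb" using elim True by blast
            have "\<bar>v x\<bar> powr q1 \<le> Mb powr q1" using vx q1 by (intro powr_mono2) auto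
            then have "K (norm x) * \<bar>v x\<bar> powr q1 \<le> Kmax * Mb powr q1"
              using Kx by (intro mult_mono) auto
            then show ?thesis using True by (auto intro: ennreal_leI)
          qed
        qed
      qed
      also have "\<dots> = ennreal (Kmax * Mb powr q1) * emeasure lborel (ball (0::'a) Mr - ball 0 R1)"
        by (rule nn_integral_cmult_indicator) simp
      also have "\<dots> \<le> ennreal (Kmax * Mb powr q1) * ennreal LA"
      proof (rule mult_left_mono)
        have "emeasure lborel (ball (0::'a) Mr - ball 0 R1) \<le> emeasure lborel (ball (0::'a) Mr)"
          by (intro emeasure_mono) auto
        then show "emeasure lborel (ball (0::'a) Mr - ball 0 R1) \<le> ennreal LA"
          using Mr by (simp add: ball_emeas LA_def)
      qed simp
      also have "\<dots> = ennreal (Kmax * Mb powr q1 * LA)"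
        using Kmax0 LA0 by (simp add: ennreal_mult[symmetric])
      finally show ?thesis .
    qed
    have "wint K q1 (ball 0 Mr) v \<le> wint K q1 (ball 0 R1) v + wint K q1 (ball 0 Mr - ball 0 R1) v"
      by (rule wint_split[OF vm Kc]) auto
    also have "\<dots> \<le> ennreal S0r + ennreal (Kmax * Mb powr q1 * LA)" by (intro add_mono W1 Wann)
    also have "\<dots> = ennreal C1" unfolding C1_def
      by (rule ennreal_plus[symmetric]) (use S0r0 Kmax0 LA0 in auto)
    finally have B1: "wint K q1 (ball 0 Mr) v \<le> ennreal C1" .
    have "wint K q2 (- ball 0 Mr) v \<le> wint K q2 (- ball 0 R2) v" by (rule wint_mono_set) (use Mr in auto)
    with W2 have B2: "wint K q2 (- ball 0 Mr) v \<le> ennreal Sir" by simp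
    show ?thesis using B1 B2 by simp
  qed
  show ?thesis
  proof (intro exI conjI ballI impI)
    show "C1 \<ge> 0" by (rule C10)
    show "Sir \<ge> 0" by (rule S0r0(2))
    fix v :: "'a \<Rightarrow> real" assume "v \<in> HsV_rad s V" "HsV_norm s V v = 1"
    then show "wint K q1 (ball 0 (max R1 R2)) v \<le> ennreal C1" "wint K q2 (- ball 0 (max R1 R2)) v \<le> ennreal Sir"
      using bounds unfolding Mr_def by blast+
  qed
qed

lemma u_bounds:
  fixes V K :: "real \<Rightarrow> real" and s q1 q2 R1 R2 :: real
  assumes N2: "DIM('a::euclidean_space) \<ge> 2"
    and s1: "1/2 < s" and s2: "s < 1"
    and q1: "q1 > 1" and q2: "q2 > 1"
    and Vc: "continuous_on {0<..} V" and Kc: "continuous_on {0<..} K"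
    and C: "C1 \<ge> 0" "C2 \<ge> 0"
    and B: "\<forall>v \<in> (HsV_rad s V :: ('a \<Rightarrow> real) set). HsV_norm s V v = 1 \<longrightarrow>
      wint K q1 (ball 0 Mr) v \<le> ennreal C1 \<and> wint K q2 (- ball 0 Mr) v \<le> ennreal C2"
    and uH: "u \<in> (HsV_rad s V :: ('a \<Rightarrow> real) set)"
  shows "wint K q1 (ball 0 Mr) u \<le> ennreal (C1 * HsV_norm s V u powr q1) \<and>
         wint K q2 (- ball 0 Mr) u \<le> ennreal (C2 * HsV_norm s V u powr q2)"
proof -
  define n where "n = HsV_norm s V u"
  have n0: "n \<ge> 0" by (simp add: n_def HsV_norm_def)
  have um[measurable]: "u \<in> borel_measurable borel" using uH by (simp add: HsV_rad_def HsV_def Hdot_def)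
  have rad: "radial u" using uH by (simp add: HsV_rad_def)
  have Lp: "(\<integral>\<^sup>+ x. ennreal (\<bar>u x\<bar> powr crit_exp DIM('a) s) \<partial>lborel) < \<infinity>"
    using uH by (simp add: HsV_rad_def HsV_def Hdot_def)
  have gfin: "gagliardo_sq s u < \<infinity>" using uH by (simp add: HsV_rad_def HsV_def Hdot_def)
  have pfin: "potential_int V u < \<infinity>" using uH by (simp add: HsV_rad_def HsV_def)
  have pe: "crit_exp DIM('a) s > 0"
  proof -
    have "real DIM('a) - 2 * s > 0" using N2 s2 by linarith
    then show ?thesis unfolding crit_exp_def by simp
  qed
  have ab: "enn2real (gagliardo_sq s u) + enn2real (potential_int V u) = n\<^sup>2"
  proof -
    have "enn2real (gagliardo_sq s u) + enn2real (potential_int V u) \<ge> 0" by simp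
    then show ?thesis unfolding n_def HsV_norm_def by simp
  qed
  show ?thesis
  proof (cases "n = 0")
    case True
    have "enn2real (gagliardo_sq s u) = 0"
    proof -
      have a: "enn2real (gagliardo_sq s u) \<ge> 0" "enn2real (potential_int V u) \<ge> 0" by simp_all
      have "enn2real (gagliardo_sq s u) + enn2real (potential_int V u) = 0" using ab True by simp
      then show ?thesis using a by linarith
    qed
    then have "gagliardo_sq s u = 0 \<or> gagliardo_sq s u = top" by (simp add: enn2real_eq_0_iff)
    then have "gagliardo_sq s u = 0" using gfin by auto
    then have "ennreal (CNs TYPE('a) s / 2) * Gn s u = 0" unfolding gag_Gn[OF um] .
    moreover have "CNs TYPE('a) s / 2 > 0" using CNs_pos[OF N2] s1 s2 by simp
    ultimately have "Gn s u = 0" by simp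
    then have AE0: "AE x in lborel. u x = 0" by (rule zero_G[OF um _ Lp pe])
    have w0: "wint K q A u = 0" if "q > 0" for q A
    proof -
      have "wint K q A u = (\<integral>\<^sup>+x. 0 \<partial>(lborel::'a measure))" unfolding wint_def
      proof (rule nn_integral_cong_AE)
        show "AE x in lborel. ennreal (K (norm x) * \<bar>u x\<bar> powr q) * indicator A x = 0"
          using AE0 by eventually_elim simp
      qed
      then show ?thesis by simp
    qed
    show ?thesis using q1 q2 True by (simp add: w0)
  next
    case False
    then have npos: "n > 0" using n0 by simp
    define v where "v x = (1 / n) * u x" for x
    have vm[measurable]: "v \<in> borel_measurable borel" unfolding v_def by measurable
    have uv: "u = (\<lambda>x. n * v x)" using npos by (auto simp: v_def)
    have gv: "gagliardo_sq s v = ennreal ((1/n)\<^sup>2) * gagliardo_sq s u"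
      unfolding v_def by (rule gag_scale[OF um])
    have pv: "potential_int V v = ennreal ((1/n)\<^sup>2) * potential_int V u"
      unfolding v_def by (rule pot_scale[OF um Vc])
    have Lv: "(\<integral>\<^sup>+ x. ennreal (\<bar>v x\<bar> powr crit_exp DIM('a) s) \<partial>lborel) = ennreal (\<bar>1/n\<bar> powr crit_exp DIM('a) s) * (\<integral>\<^sup>+ x. ennreal (\<bar>u x\<bar> powr crit_exp DIM('a) s) \<partial>lborel)"
      unfolding v_def by (rule Lp_scale[OF um])
    have vH: "v \<in> HsV_rad s V"
    proof -
      have "radial v" using rad unfolding radial_def v_def by metis
      moreover have "(\<integral>\<^sup>+ x. ennreal (\<bar>v x\<bar> powr crit_exp DIM('a) s) \<partial>lborel) < \<infinity>"
        unfolding Lv using Lp by (simp add: ennreal_mult_less_top)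
      moreover have "gagliardo_sq s v < \<infinity>" unfolding gv using gfin by (simp add: ennreal_mult_less_top)
      moreover have "potential_int V v < \<infinity>" unfolding pv using pfin by (simp add: ennreal_mult_less_top)
      ultimately show ?thesis using vm by (simp add: HsV_rad_def HsV_def Hdot_def)
    qed
    have v1: "HsV_norm s V v = 1"
    proof -
      have "enn2real (gagliardo_sq s v) + enn2real (potential_int V v) = (1/n)\<^sup>2 * (enn2real (gagliardo_sq s u) + enn2real (potential_int V u))"
        unfolding gv pv by (simp add: enn2real_mult distrib_left)
      also have "\<dots> = 1" unfolding ab using npos by (simp add: power_divide)
      finally show ?thesis unfolding HsV_norm_def by simp
    qed
    have Bv: "wint K q1 (ball 0 Mr) v \<le> ennreal C1" "wint K q2 (- ball 0 Mr) v \<le> ennreal C2"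
      using B vH v1 by blast+
    have "wint K q1 (ball 0 Mr) u = ennreal (\<bar>n\<bar> powr q1) * wint K q1 (ball 0 Mr) v"
      unfolding uv by (rule wint_scale[OF vm Kc]) simp
    also have "\<dots> \<le> ennreal (\<bar>n\<bar> powr q1) * ennreal C1" by (intro mult_left_mono Bv) simp
    also have "\<dots> = ennreal (C1 * n powr q1)" using n0 C by (simp add: ennreal_mult[symmetric] mult.commute)
    finally have X1: "wint K q1 (ball 0 Mr) u \<le> ennreal (C1 * n powr q1)" .
    have "wint K q2 (- ball 0 Mr) u = ennreal (\<bar>n\<bar> powr q2) * wint K q2 (- ball 0 Mr) v"
      unfolding uv by (rule wint_scale[OF vm Kc]) simp
    also have "\<dots> \<le> ennreal (\<bar>n\<bar> powr q2) * ennreal C2" by (intro mult_left_mono Bv) simp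
    also have "\<dots> = ennreal (C2 * n powr q2)" using n0 C by (simp add: ennreal_mult[symmetric] mult.commute)
    finally have X2: "wint K q2 (- ball 0 Mr) u \<le> ennreal (C2 * n powr q2)" .
    show ?thesis using X1 X2 unfolding n_def by simp
  qed
qed

lemma LqK_norm_bound:
  assumes W: "wint K q UNIV w \<le> ennreal (c * n powr q)" and c: "c \<ge> 0" and n: "n \<ge> 0" and q: "q > 0"
  shows "LqK_norm K q w \<le> c powr (1/q) * n"
proof -
  have "enn2real (wint K q UNIV w) \<le> enn2real (ennreal (c * n powr q))"
    by (rule enn2real_mono[OF W]) simp
  also have "\<dots> = c * n powr q" using c by simp
  finally have e: "enn2real (wint K q UNIV w) \<le> c * n powr q" .
  have "LqK_norm K q w \<le> (c * n powr q) powr (1/q)" unfolding LqK_norm_def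
    using e q by (intro powr_mono2) auto
  also have "\<dots> = c powr (1/q) * (n powr q) powr (1/q)" using c n by (simp add: powr_mult)
  also have "(n powr q) powr (1/q) = n" using q n by (simp add: powr_powr)
  finally show ?thesis .
qed

theorem theorem3p2:
  fixes V K :: "real \<Rightarrow> real" and s q1 q2 R1 R2 :: real
  assumes "DIM('a::euclidean_space) \<ge> 2"
    and "1/2 < s" and "s < 1"
    and "q1 > 1" and "q2 > 1"
    and "continuous_on {0<..} V" and "\<forall>r>0. V r \<ge> 0"
    and "continuous_on {0<..} K" and "\<forall>r>0. K r > 0"
    and "R1 > 0" and "R2 > 0"
    and "S0 s V K TYPE('a) q1 R1 < \<infinity>"
    and "Sinf s V K TYPE('a) q2 R2 < \<infinity>"
  shows "cont_embedded s V K TYPE('a) q1 q2"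
proof -
  note A = assms
  obtain C1 C2 where C: "C1 \<ge> 0" "C2 \<ge> 0" and
    B: "\<forall>v \<in> (HsV_rad s V :: ('a \<Rightarrow> real) set). HsV_norm s V v = 1 \<longrightarrow>
      wint K q1 (ball 0 (max R1 R2)) v \<le> ennreal C1 \<and> wint K q2 (- ball 0 (max R1 R2)) v \<le> ennreal C2"
    using norm1_bound[OF A] by blast
  let ?Mr = "max R1 R2"
  have UB: "wint K q1 (ball 0 ?Mr) u \<le> ennreal (C1 * HsV_norm s V u powr q1) \<and>
         wint K q2 (- ball 0 ?Mr) u \<le> ennreal (C2 * HsV_norm s V u powr q2)"
    if "u \<in> (HsV_rad s V :: ('a \<Rightarrow> real) set)" for u
    by (rule u_bounds[OF A(1-6) A(8) C B that])
  have q0: "q1 > 0" "q2 > 0" using A(4,5) by auto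
  have main: "(\<lambda>x. u x * indicator (ball 0 ?Mr) x) \<in> LqK K q1 \<and> (\<lambda>x. u x * indicator (- ball 0 ?Mr) x) \<in> LqK K q2
      \<and> LqK_norm K q1 (\<lambda>x. u x * indicator (ball 0 ?Mr) x) \<le> C1 powr (1/q1) * HsV_norm s V u
      \<and> LqK_norm K q2 (\<lambda>x. u x * indicator (- ball 0 ?Mr) x) \<le> C2 powr (1/q2) * HsV_norm s V u"
    if uH: "u \<in> (HsV_rad s V :: ('a \<Rightarrow> real) set)" for u
  proof -
    have um[measurable]: "u \<in> borel_measurable borel" using uH by (simp add: HsV_rad_def HsV_def Hdot_def)
    have n0: "HsV_norm s V u \<ge> 0" by (simp add: HsV_norm_def)
    have W1: "wint K q1 UNIV (\<lambda>x. u x * indicator (ball 0 ?Mr) x) \<le> ennreal (C1 * HsV_norm s V u powr q1)"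
      unfolding wint_restrict[OF q0(1)] using UB[OF uH] by blast
    have W2: "wint K q2 UNIV (\<lambda>x. u x * indicator (- ball 0 ?Mr) x) \<le> ennreal (C2 * HsV_norm s V u powr q2)"
      unfolding wint_restrict[OF q0(2)] using UB[OF uH] by blast
    have m1: "(\<lambda>x. u x * indicator (ball 0 ?Mr) x) \<in> borel_measurable lborel" by measurable
    have m2: "(\<lambda>x. u x * indicator (- ball 0 ?Mr) x) \<in> borel_measurable lborel" by measurable
    have "(\<lambda>x. u x * indicator (ball 0 ?Mr) x) \<in> LqK K q1"
      unfolding LqK_def using m1 W1 by (simp add: le_less_trans[OF W1])
    moreover have "(\<lambda>x. u x * indicator (- ball 0 ?Mr) x) \<in> LqK K q2"
      unfolding LqK_def using m2 W2 by (simp add: le_less_trans[OF W2])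
    moreover have "LqK_norm K q1 (\<lambda>x. u x * indicator (ball 0 ?Mr) x) \<le> C1 powr (1/q1) * HsV_norm s V u"
      by (rule LqK_norm_bound[OF W1 C(1) n0 q0(1)])
    moreover have "LqK_norm K q2 (\<lambda>x. u x * indicator (- ball 0 ?Mr) x) \<le> C2 powr (1/q2) * HsV_norm s V u"
      by (rule LqK_norm_bound[OF W2 C(2) n0 q0(2)])
    ultimately show ?thesis by blast
  qed
  have split: "u = (\<lambda>x. u x * indicator (ball 0 ?Mr) x + u x * indicator (- ball 0 ?Mr) x)" for u :: "'a \<Rightarrow> real"
    by (auto simp: indicator_def)
  show ?thesis unfolding cont_embedded_def
  proof (intro conjI)
    show "(HsV_rad s V :: ('a \<Rightarrow> real) set) \<subseteq> LsumK K q1 q2"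
    proof
      fix u :: "'a \<Rightarrow> real" assume uH: "u \<in> HsV_rad s V"
      show "u \<in> LsumK K q1 q2" unfolding LsumK_def
        using main[OF uH] split[of u] by blast
    qed
    show "\<exists>C. \<forall>u \<in> (HsV_rad s V :: ('a \<Rightarrow> real) set). LsumK_norm K q1 q2 u \<le> C * HsV_norm s V u"
    proof (intro exI ballI)
      fix u :: "'a \<Rightarrow> real" assume uH: "u \<in> HsV_rad s V"
      let ?u1 = "\<lambda>x. u x * indicator (ball 0 ?Mr) x" and ?u2 = "\<lambda>x. u x * indicator (- ball 0 ?Mr) x"
      let ?S = "{max (LqK_norm K q1 u1) (LqK_norm K q2 u2) | u1 u2.
          u1 \<in> LqK K q1 \<and> u2 \<in> LqK K q2 \<and> u = (\<lambda>x. u1 x + u2 x)}"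
      have mem: "max (LqK_norm K q1 ?u1) (LqK_norm K q2 ?u2) \<in> ?S"
        using main[OF uH] split[of u] by blast
      have bdd: "bdd_below ?S"
        by (rule bdd_belowI[of _ 0]) (auto simp: LqK_norm_def intro: max.coboundedI1)
      have n0: "HsV_norm s V u \<ge> 0" by (simp add: HsV_norm_def)
      have "LsumK_norm K q1 q2 u \<le> max (LqK_norm K q1 ?u1) (LqK_norm K q2 ?u2)"
        unfolding LsumK_norm_def by (rule cInf_lower[OF mem bdd])
      also have "\<dots> \<le> max (C1 powr (1/q1) * HsV_norm s V u) (C2 powr (1/q2) * HsV_norm s V u)"
        using main[OF uH] by (intro max.mono) auto
      also have "\<dots> \<le> (C1 powr (1/q1) + C2 powr (1/q2)) * HsV_norm s V u"
        using n0 by (simp add: distrib_right mult_nonneg_nonneg)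
      finally show "LsumK_norm K q1 q2 u \<le> (C1 powr (1/q1) + C2 powr (1/q2)) * HsV_norm s V u" .
    qed
  qed
qed

end
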